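(* Let $J\subseteq R=K[x_1,\ldots,x_n]$ be a strongly stable ideal and $m\ge1$. Then $R/J$ has $m$-times the weak Lefschetz property if and only if, for every $i=0,\ldots,m-1$, $x_{n-i}$ is a weak Lefschetz element for $R/(J+(x_n,\ldots,x_{n-i+1}))$ (for $i=0$ this algebra is $R/J$).
   Context: $K$ is an infinite field of characteristic $0$. A monomial ideal $J$ is strongly stable if for every monomial $M\in J$ and every variable $x_k$ dividing $M$, $(x_i/x_k)M\in J$ for all $i<k$. For a standard graded (Artinian) algebra $A$, $\ell\in A_1$ is a weak Lefschetz element (WLE) if $\times\ell:A_d\to A_{d+1}$ has maximal rank for all $d\ge1$; $A$ has the WLP if it has a WLE, and $A$ has $m$-times the WLP if there are $\ell_1,\ldots,\ell_m\in A_1$ with $\ell_1$ a WLE for $A$ and $\ell_i$ a WLE for $A/(\ell_1,\ldots,\ell_{i-1})$ for $i=2,\ldots,m$. *)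

theory Defs
  imports "HOL-Library.Poly_Mapping"
begin

text \<open>Variable x_{i+1} of the paper is
index i here, so R = K[x_1,...,x_n] uses the indices 0,...,n-1.\<close>

type_synonym 'a mpoly = "((nat, nat) poly_mapping, 'a) poly_mapping"

definition Var :: "nat \<Rightarrow> 'a::{zero,one} mpoly" where
  "Var i = Poly_Mapping.single (Poly_Mapping.single i 1) 1"

definition monom :: "(nat, nat) poly_mapping \<Rightarrow> 'a::{zero,one} mpoly" where
  "monom a = Poly_Mapping.single a 1"

definition polys :: "nat \<Rightarrow> 'a::zero mpoly set" where
  "polys n = {p :: 'a mpoly. \<forall>a\<in>Poly_Mapping.keys p. Poly_Mapping.keys a \<subseteq> {..<n}}"

definition mdeg :: "(nat, nat) poly_mapping \<Rightarrow> nat" where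
  "mdeg a = (\<Sum>i\<in>Poly_Mapping.keys a. Poly_Mapping.lookup a i)"

definition homog :: "nat \<Rightarrow> nat \<Rightarrow> 'a::zero mpoly set" where
  "homog n d = {p \<in> polys n. \<forall>a\<in>Poly_Mapping.keys p. mdeg a = d}"

inductive_set ideal_gen :: "nat \<Rightarrow> 'a::comm_ring_1 mpoly set \<Rightarrow> 'a mpoly set"
  for n S where
  zero: "0 \<in> ideal_gen n S"
| gen: "s \<in> S \<Longrightarrow> s \<in> ideal_gen n S"
| add: "p \<in> ideal_gen n S \<Longrightarrow> q \<in> ideal_gen n S \<Longrightarrow> p + q \<in> ideal_gen n S"
| mult: "r \<in> polys n \<Longrightarrow> p \<in> ideal_gen n S \<Longrightarrow> r * p \<in> ideal_gen n S"

definition monomial_ideal :: "nat \<Rightarrow> 'a::comm_ring_1 mpoly set \<Rightarrow> bool" where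
  "monomial_ideal n J \<longleftrightarrow>
     (\<exists>G. (\<forall>a\<in>G. Poly_Mapping.keys a \<subseteq> {..<n}) \<and> J = ideal_gen n (monom ` G))"

definition strongly_stable :: "nat \<Rightarrow> 'a::comm_ring_1 mpoly set \<Rightarrow> bool" where
  "strongly_stable n J \<longleftrightarrow> monomial_ideal n J \<and>
     (\<forall>a k i. Poly_Mapping.keys a \<subseteq> {..<n} \<longrightarrow> k < n \<longrightarrow> i < k \<longrightarrow>
        monom (a + Poly_Mapping.single k 1) \<in> J \<longrightarrow>
        monom (a + Poly_Mapping.single i 1) \<in> J)"

text \<open>For the graded algebra A = R/I (I homogeneous) and a linear form l \<in> R_1,
  the map  \<times>l : A_d \<rightarrow> A_{d+1}  has maximal rank, i.e. is injective or surjective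
  (the spaces are finite dimensional).  Written out on representatives.\<close>
definition mult_max_rank :: "nat \<Rightarrow> 'a::comm_ring_1 mpoly set \<Rightarrow> 'a mpoly \<Rightarrow> nat \<Rightarrow> bool" where
  "mult_max_rank n I l d \<longleftrightarrow>
     (\<forall>f\<in>homog n d. l * f \<in> I \<longrightarrow> f \<in> I) \<or>
     (\<forall>g\<in>homog n (d+1). \<exists>f\<in>homog n d. g - l * f \<in> I)"

definition is_WLE :: "nat \<Rightarrow> 'a::comm_ring_1 mpoly set \<Rightarrow> 'a mpoly \<Rightarrow> bool" where
  "is_WLE n I l \<longleftrightarrow> l \<in> homog n 1 \<and> (\<forall>d\<ge>1. mult_max_rank n I l d)"

definition m_times_WLP :: "nat \<Rightarrow> 'a::comm_ring_1 mpoly set \<Rightarrow> nat \<Rightarrow> bool" where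
  "m_times_WLP n I m \<longleftrightarrow>
     (\<exists>ls :: nat \<Rightarrow> 'a mpoly. \<forall>i<m. is_WLE n (ideal_gen n (I \<union> ls ` {..<i})) (ls i))"

end

theory Submission
  imports Defs "HOL-Library.FuncSet"
begin

abbreviation (input) keys where "keys \<equiv> Poly_Mapping.keys"
abbreviation (input) lookup where "lookup \<equiv> Poly_Mapping.lookup"

lemma poly_repr: "(p::'a \<Rightarrow>\<^sub>0 'b::comm_monoid_add) = (\<Sum>a\<in>keys p. Poly_Mapping.single a (lookup p a))"
proof (rule poly_mapping_eqI)
  fix k
  have "lookup (\<Sum>a\<in>keys p. Poly_Mapping.single a (lookup p a)) k
      = (\<Sum>a\<in>keys p. (if a = k then lookup p k else 0))"
    by (simp add: lookup_sum lookup_single when_def)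
  also have "\<dots> = lookup p k" by (simp add: sum.delta in_keys_iff)
  finally show "lookup p k = lookup (\<Sum>a\<in>keys p. Poly_Mapping.single a (lookup p a)) k" by simp
qed

lemma update_single_add: "a \<notin> keys f \<Longrightarrow> Poly_Mapping.update a b f = Poly_Mapping.single a b + (f::'a \<Rightarrow>\<^sub>0 'b::monoid_add)"
  by (rule poly_mapping_eqI) (auto simp: lookup_update lookup_add lookup_single when_def in_keys_iff)

lemma pm_induct [case_names zero add]:
  assumes "P 0"
    and "\<And>a c p. a \<notin> keys p \<Longrightarrow> c \<noteq> 0 \<Longrightarrow> P p \<Longrightarrow> P (Poly_Mapping.single a c + (p::'a \<Rightarrow>\<^sub>0 'b::monoid_add))"
  shows "P q"
  using assms by (induct q rule: update_induct) (simp_all add: update_single_add)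

definition mon :: "(nat \<Rightarrow> 'a::comm_ring_1 mpoly) \<Rightarrow> (nat \<Rightarrow>\<^sub>0 nat) \<Rightarrow> 'a mpoly" where
  "mon \<sigma> a = (\<Prod>i\<in>keys a. \<sigma> i ^ lookup a i)"

definition subst :: "(nat \<Rightarrow> 'a::comm_ring_1 mpoly) \<Rightarrow> 'a mpoly \<Rightarrow> 'a mpoly" where
  "subst \<sigma> p = (\<Sum>a\<in>keys p. Poly_Mapping.single 0 (lookup p a) * mon \<sigma> a)"

lemma mon_superset: "finite B \<Longrightarrow> keys a \<subseteq> B \<Longrightarrow> mon \<sigma> a = (\<Prod>i\<in>B. \<sigma> i ^ lookup a i)"
  unfolding mon_def by (rule prod.mono_neutral_left) (auto simp: in_keys_iff)

lemma mon_add: "mon \<sigma> (a + b) = mon \<sigma> a * mon \<sigma> b"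
proof -
  let ?B = "keys a \<union> keys b"
  have "mon \<sigma> (a+b) = (\<Prod>i\<in>?B. \<sigma> i ^ lookup (a+b) i)"
    by (rule mon_superset) (auto dest: set_mp[OF keys_add])
  also have "\<dots> = (\<Prod>i\<in>?B. \<sigma> i ^ lookup a i) * (\<Prod>i\<in>?B. \<sigma> i ^ lookup b i)"
    by (simp add: lookup_add power_add prod.distrib)
  also have "\<dots> = mon \<sigma> a * mon \<sigma> b"
    by (simp add: mon_superset[symmetric])
  finally show ?thesis .
qed

lemma mon_zero [simp]: "mon \<sigma> 0 = 1"
  by (simp add: mon_def)

lemma mon_single [simp]: "mon \<sigma> (Poly_Mapping.single i e) = \<sigma> i ^ e"
  by (simp add: mon_def)

lemma subst_superset:
  "finite A \<Longrightarrow> keys p \<subseteq> A \<Longrightarrow> subst \<sigma> p = (\<Sum>a\<in>A. Poly_Mapping.single 0 (lookup p a) * mon \<sigma> a)"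
  unfolding subst_def by (rule sum.mono_neutral_left) (auto simp: in_keys_iff)

lemma subst_add: "subst \<sigma> (p + q) = subst \<sigma> p + subst \<sigma> q"
proof -
  let ?A = "keys p \<union> keys q"
  have "subst \<sigma> (p+q) = (\<Sum>a\<in>?A. Poly_Mapping.single 0 (lookup (p+q) a) * mon \<sigma> a)"
    by (rule subst_superset) (auto dest: set_mp[OF keys_add])
  also have "\<dots> = (\<Sum>a\<in>?A. Poly_Mapping.single 0 (lookup p a) * mon \<sigma> a) + (\<Sum>a\<in>?A. Poly_Mapping.single 0 (lookup q a) * mon \<sigma> a)"
    by (simp add: lookup_add single_add distrib_right sum.distrib)
  also have "\<dots> = subst \<sigma> p + subst \<sigma> q"
    by (simp add: subst_superset[symmetric])
  finally show ?thesis .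
qed

lemma subst_zero [simp]: "subst \<sigma> 0 = 0"
  by (simp add: subst_def)

lemma subst_single: "subst \<sigma> (Poly_Mapping.single a c) = Poly_Mapping.single 0 c * mon \<sigma> a"
  by (simp add: subst_def)

lemma subst_single_mult: "subst \<sigma> (Poly_Mapping.single a c * q) = Poly_Mapping.single 0 c * mon \<sigma> a * subst \<sigma> q"
proof (induct q rule: pm_induct)
  case zero then show ?case by simp
next
  case (add b d q)
  have "Poly_Mapping.single a c * (Poly_Mapping.single b d + q) = Poly_Mapping.single (a+b) (c*d) + Poly_Mapping.single a c * q"
    by (simp add: distrib_left mult_single)
  moreover have "subst \<sigma> (Poly_Mapping.single (a+b) (c*d)) = Poly_Mapping.single 0 c * mon \<sigma> a * (Poly_Mapping.single 0 d * mon \<sigma> b)"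
    by (simp add: subst_single mon_add mult_single[of 0 c 0 d, simplified, symmetric] algebra_simps)
  ultimately show ?case using add
    by (simp add: subst_add subst_single algebra_simps)
qed

lemma subst_mult: "subst \<sigma> (p * q) = subst \<sigma> p * subst \<sigma> q"
proof (induct p rule: pm_induct)
  case zero then show ?case by simp
next
  case (add a c p)
  then show ?case
    by (simp add: distrib_right subst_add subst_single_mult subst_single)
qed

lemma subst_uminus: "subst \<sigma> (- p) = - subst \<sigma> p"
proof -
  have "subst \<sigma> (- p) + subst \<sigma> p = 0" by (simp add: subst_add[symmetric])
  then show ?thesis by (simp add: eq_neg_iff_add_eq_0)
qed

lemma subst_diff: "subst \<sigma> (p - q) = subst \<sigma> p - subst \<sigma> q"
  using subst_add[of \<sigma> p "-q"] by (simp add: subst_uminus)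

lemma subst_const [simp]: "subst \<sigma> (Poly_Mapping.single 0 c) = Poly_Mapping.single 0 c"
  by (simp add: subst_single)

lemma subst_one [simp]: "subst \<sigma> 1 = 1"
  using subst_const[of \<sigma> 1] by simp

lemma subst_power: "subst \<sigma> (p ^ e) = subst \<sigma> p ^ e"
  by (induct e) (simp_all add: subst_mult)

lemma subst_prod: "subst \<sigma> (\<Prod>i\<in>A. f i) = (\<Prod>i\<in>A. subst \<sigma> (f i))"
  by (induct A rule: infinite_finite_induct) (simp_all add: subst_mult)

lemma subst_sum: "subst \<sigma> (\<Sum>i\<in>A. f i) = (\<Sum>i\<in>A. subst \<sigma> (f i))"
  by (induct A rule: infinite_finite_induct) (simp_all add: subst_add)

lemma subst_Var [simp]: "subst \<sigma> (Var i) = \<sigma> i"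
  by (simp add: Var_def subst_single)

lemma mon_subst: "subst \<tau> (mon \<sigma> a) = mon (\<lambda>i. subst \<tau> (\<sigma> i)) a"
  by (simp add: mon_def subst_prod subst_power)

lemma subst_subst: "subst \<tau> (subst \<sigma> p) = subst (\<lambda>i. subst \<tau> (\<sigma> i)) p"
proof (induct p rule: pm_induct)
  case zero then show ?case by simp
next
  case (add a c p)
  then show ?case by (simp add: subst_add subst_single subst_mult mon_subst)
qed

lemma Var_power: "(Var i :: 'a::comm_ring_1 mpoly) ^ e = monom (Poly_Mapping.single i e)"
proof (induct e)
  case 0 then show ?case by (simp add: monom_def)
next
  case (Suc e)
  then show ?case
    by (simp add: monom_def Var_def mult_single single_add[symmetric] mult.commute)
qed

lemma monom_add: "(monom (a + b) :: 'a::comm_ring_1 mpoly) = monom a * monom b"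
  by (simp add: monom_def mult_single)

lemma mon_Var: "mon Var a = (monom a :: 'a::comm_ring_1 mpoly)"
proof (induct a rule: pm_induct)
  case zero then show ?case by (simp add: monom_def)
next
  case (add i c a)
  then show ?case by (simp add: mon_add Var_power monom_add)
qed

lemma subst_Var_id [simp]: "subst Var p = p"
proof (induct p rule: pm_induct)
  case zero then show ?case by simp
next
  case (add a c p)
  then show ?case by (simp add: subst_add subst_single mon_Var monom_def mult_single)
qed

lemma subst_monom: "subst \<sigma> (monom a) = mon \<sigma> a"
  by (simp add: monom_def subst_single)

lemma mon_cong: "(\<And>i. i \<in> keys a \<Longrightarrow> \<sigma> i = \<tau> i) \<Longrightarrow> mon \<sigma> a = mon \<tau> a"
  unfolding mon_def by (rule prod.cong) auto

lemma keys_add_nat: "keys (a + b) = keys a \<union> keys (b::'x \<Rightarrow>\<^sub>0 nat)"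
  by (auto simp: in_keys_iff lookup_add)

lemma mdeg_superset: "finite B \<Longrightarrow> keys a \<subseteq> B \<Longrightarrow> mdeg a = (\<Sum>i\<in>B. lookup a i)"
  unfolding mdeg_def by (rule sum.mono_neutral_left) (auto simp: in_keys_iff)

lemma mdeg_add: "mdeg (a + b) = mdeg a + mdeg b"
proof -
  let ?B = "keys a \<union> keys b"
  have "mdeg (a+b) = (\<Sum>i\<in>?B. lookup (a+b) i)"
    by (rule mdeg_superset) (auto simp: keys_add_nat)
  also have "\<dots> = (\<Sum>i\<in>?B. lookup a i) + (\<Sum>i\<in>?B. lookup b i)"
    by (simp add: lookup_add sum.distrib)
  also have "\<dots> = mdeg a + mdeg b" by (simp add: mdeg_superset[symmetric])
  finally show ?thesis .
qed

lemma mdeg_zero [simp]: "mdeg 0 = 0" by (simp add: mdeg_def)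
lemma mdeg_single [simp]: "mdeg (Poly_Mapping.single i e) = e" by (simp add: mdeg_def)

lemma mdeg_zero_iff: "mdeg a = 0 \<longleftrightarrow> a = 0"
  by (auto simp: mdeg_def in_keys_iff intro: poly_mapping_eqI)

lemma polys_add: "p \<in> polys n \<Longrightarrow> q \<in> polys n \<Longrightarrow> p + q \<in> polys n"
  unfolding polys_def by (auto dest!: set_mp[OF keys_add])

lemma polys_uminus: "p \<in> polys n \<Longrightarrow> - (p::'a::ab_group_add mpoly) \<in> polys n"
  unfolding polys_def by (simp add: keys_def)

lemma polys_diff: "p \<in> polys n \<Longrightarrow> q \<in> polys n \<Longrightarrow> (p::'a::ab_group_add mpoly) - q \<in> polys n"
  using polys_add[of p n "-q"] polys_uminus[of q n] by simp

lemma polys_mult: "p \<in> polys n \<Longrightarrow> q \<in> polys n \<Longrightarrow> (p::'a::comm_ring_1 mpoly) * q \<in> polys n"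
  unfolding polys_def by (force dest!: set_mp[OF keys_mult] simp: keys_add_nat)

lemma polys_zero [simp]: "0 \<in> polys n" by (simp add: polys_def)

lemma polys_single: "keys a \<subseteq> {..<n} \<Longrightarrow> Poly_Mapping.single a c \<in> polys n"
  by (simp add: polys_def)

lemma polys_const [simp]: "Poly_Mapping.single 0 c \<in> polys n"
  by (simp add: polys_single)

lemma polys_one [simp]: "(1::'a::comm_ring_1 mpoly) \<in> polys n"
  by (metis polys_const single_one)

lemma polys_Var: "i < n \<Longrightarrow> Var i \<in> polys n"
  by (simp add: Var_def polys_single)

lemma polys_monom: "keys a \<subseteq> {..<n} \<Longrightarrow> monom a \<in> polys n"
  by (simp add: monom_def polys_single)

lemma polys_sum: "(\<And>i. i \<in> A \<Longrightarrow> f i \<in> polys n) \<Longrightarrow> sum f A \<in> polys n"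
  by (induct A rule: infinite_finite_induct) (auto intro: polys_add)

lemma polys_prod: "(\<And>i. i \<in> A \<Longrightarrow> f i \<in> polys n) \<Longrightarrow> (prod f A :: 'a::comm_ring_1 mpoly) \<in> polys n"
  by (induct A rule: infinite_finite_induct) (auto intro: polys_mult)

lemma polys_power: "p \<in> polys n \<Longrightarrow> (p::'a::comm_ring_1 mpoly) ^ e \<in> polys n"
  by (induct e) (auto intro: polys_mult)

lemma mon_polys: "(\<And>i. i \<in> keys a \<Longrightarrow> \<sigma> i \<in> polys n) \<Longrightarrow> mon \<sigma> a \<in> polys n"
  unfolding mon_def by (auto intro!: polys_prod polys_power)

lemma subst_polys:
  assumes "\<And>i. i < n \<Longrightarrow> \<sigma> i \<in> polys n" and "p \<in> polys n"
  shows "subst \<sigma> p \<in> polys n"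
  unfolding subst_def using assms
  by (intro polys_sum polys_mult polys_const mon_polys) (auto simp: polys_def)

lemma homog_polys: "p \<in> homog n d \<Longrightarrow> p \<in> polys n" by (simp add: homog_def)

lemma homog_zero [simp]: "0 \<in> homog n d" by (simp add: homog_def)

lemma homog_add: "p \<in> homog n d \<Longrightarrow> q \<in> homog n d \<Longrightarrow> p + q \<in> homog n d"
  unfolding homog_def by (auto intro: polys_add dest!: set_mp[OF keys_add])

lemma homog_uminus: "p \<in> homog n d \<Longrightarrow> - (p::'a::ab_group_add mpoly) \<in> homog n d"
  unfolding homog_def by (auto intro: polys_uminus simp: keys_def)

lemma homog_diff: "p \<in> homog n d \<Longrightarrow> q \<in> homog n d \<Longrightarrow> (p::'a::ab_group_add mpoly) - q \<in> homog n d"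
  using homog_add[of p n d "-q"] homog_uminus[of q n d] by simp

lemma homog_mult: "p \<in> homog n d \<Longrightarrow> q \<in> homog n e \<Longrightarrow> (p::'a::comm_ring_1 mpoly) * q \<in> homog n (d + e)"
  unfolding homog_def by (force intro: polys_mult dest!: set_mp[OF keys_mult] simp: mdeg_add)

lemma homog_single: "keys a \<subseteq> {..<n} \<Longrightarrow> mdeg a = d \<Longrightarrow> Poly_Mapping.single a c \<in> homog n d"
  by (simp add: homog_def polys_single)

lemma homog_const: "Poly_Mapping.single 0 c \<in> homog n 0"
  by (simp add: homog_single)

lemma homog_one: "(1::'a::comm_ring_1 mpoly) \<in> homog n 0"
  by (metis homog_const single_one)

lemma homog_Var: "i < n \<Longrightarrow> Var i \<in> homog n 1"
  by (simp add: Var_def homog_single)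

lemma homog_monom: "keys a \<subseteq> {..<n} \<Longrightarrow> monom a \<in> homog n (mdeg a)"
  by (simp add: monom_def homog_single)

lemma homog_smult: "p \<in> homog n d \<Longrightarrow> Poly_Mapping.single 0 c * (p::'a::comm_ring_1 mpoly) \<in> homog n d"
  using homog_mult[OF homog_const, of p n d c] by simp

lemma homog_sum: "(\<And>i. i \<in> A \<Longrightarrow> f i \<in> homog n d) \<Longrightarrow> sum f A \<in> homog n d"
  by (induct A rule: infinite_finite_induct) (auto intro: homog_add)

lemma homog_prod: "(\<And>i. i \<in> A \<Longrightarrow> f i \<in> homog n (g i)) \<Longrightarrow> (prod f A :: 'a::comm_ring_1 mpoly) \<in> homog n (sum g A)"
proof (induct A rule: infinite_finite_induct)
  case (infinite A) then show ?case by (simp add: homog_one)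
next
  case empty then show ?case by (simp add: homog_one)
next
  case (insert x F) then show ?case by (simp add: homog_mult)
qed

lemma homog_power: "p \<in> homog n d \<Longrightarrow> (p::'a::comm_ring_1 mpoly) ^ e \<in> homog n (e * d)"
proof (induct e)
  case 0 then show ?case by (simp add: homog_one)
next
  case (Suc e) then show ?case using homog_mult[of p n d "p^e" "e*d"] by (simp add: add.commute)
qed

lemma mon_homog:
  assumes "\<And>i. i \<in> keys a \<Longrightarrow> \<sigma> i \<in> homog n 1"
  shows "mon \<sigma> a \<in> homog n (mdeg a)"
proof -
  have "\<sigma> i ^ lookup a i \<in> homog n (lookup a i)" if "i\<in>keys a" for i
    using homog_power[OF assms[OF that], of "lookup a i"] by simp
  then show ?thesis unfolding mon_def mdeg_def by (rule homog_prod)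
qed

lemma subst_homog:
  assumes "\<And>i. i < n \<Longrightarrow> \<sigma> i \<in> homog n 1" and "p \<in> homog n d"
  shows "subst \<sigma> p \<in> homog n d"
proof -
  have "Poly_Mapping.single 0 (lookup p a) * mon \<sigma> a \<in> homog n d" if "a \<in> keys p" for a
  proof -
    from assms(2) that have "keys a \<subseteq> {..<n}" "mdeg a = d" by (auto simp: homog_def polys_def)
    then have "mon \<sigma> a \<in> homog n d" using mon_homog[of a \<sigma> n] assms(1) by auto
    then show ?thesis by (rule homog_smult)
  qed
  then show ?thesis unfolding subst_def by (rule homog_sum)
qed

lemma ideal_polys: assumes "S \<subseteq> polys n" "p \<in> ideal_gen n S" shows "p \<in> polys n"
  using assms(2) by induct (use assms(1) in \<open>auto intro: polys_add polys_mult\<close>)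

lemma ideal_gen_mono: "S \<subseteq> T \<Longrightarrow> ideal_gen n S \<subseteq> ideal_gen n T"
proof
  fix p assume "S \<subseteq> T" "p \<in> ideal_gen n S"
  then show "p \<in> ideal_gen n T"
    by (induct rule: ideal_gen.induct[OF \<open>p \<in> ideal_gen n S\<close>]) (auto intro: ideal_gen.intros)
qed

lemma ideal_gen_subset: "S \<subseteq> ideal_gen n T \<Longrightarrow> ideal_gen n S \<subseteq> ideal_gen n T"
proof
  fix p assume "S \<subseteq> ideal_gen n T" "p \<in> ideal_gen n S"
  then show "p \<in> ideal_gen n T"
    by (induct rule: ideal_gen.induct[OF \<open>p \<in> ideal_gen n S\<close>]) (auto intro: ideal_gen.intros)
qed

lemma ideal_gen_absorb: "ideal_gen n (ideal_gen n A \<union> B) = ideal_gen n (A \<union> B)"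
proof
  show "ideal_gen n (ideal_gen n A \<union> B) \<subseteq> ideal_gen n (A \<union> B)"
    by (rule ideal_gen_subset) (auto intro: ideal_gen.gen set_mp[OF ideal_gen_mono[of A "A \<union> B"]])
  show "ideal_gen n (A \<union> B) \<subseteq> ideal_gen n (ideal_gen n A \<union> B)"
    by (rule ideal_gen_mono) (auto intro: ideal_gen.gen)
qed

lemma ideal_gen_idem: "ideal_gen n (ideal_gen n A) = ideal_gen n A"
  using ideal_gen_absorb[of n A "{}"] by simp

lemma ideal_smult: "p \<in> ideal_gen n S \<Longrightarrow> Poly_Mapping.single 0 c * p \<in> ideal_gen n S"
  by (rule ideal_gen.mult) simp_all

lemma ideal_uminus: "p \<in> ideal_gen n S \<Longrightarrow> - p \<in> ideal_gen n S"
  using ideal_smult[of p n S "-1"] by (simp add: single_uminus)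

lemma ideal_diff: "p \<in> ideal_gen n S \<Longrightarrow> q \<in> ideal_gen n S \<Longrightarrow> p - q \<in> ideal_gen n S"
  using ideal_gen.add[of p n S "-q"] ideal_uminus[of q n S] by simp

lemma ideal_sum: "(\<And>i. i \<in> A \<Longrightarrow> f i \<in> ideal_gen n S) \<Longrightarrow> sum f A \<in> ideal_gen n S"
  by (induct A rule: infinite_finite_induct) (auto intro: ideal_gen.intros)

lemma ideal_mult_right: "r \<in> polys n \<Longrightarrow> p \<in> ideal_gen n S \<Longrightarrow> p * r \<in> ideal_gen n S"
  using ideal_gen.mult[of r n p S] by (simp add: mult.commute)

lemma subst_ideal:
  assumes "\<And>i. i < n \<Longrightarrow> \<sigma> i \<in> polys n" and "p \<in> ideal_gen n S"
  shows "subst \<sigma> p \<in> ideal_gen n (subst \<sigma> ` S)"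
  using assms(2)
  by (induct rule: ideal_gen.induct) (auto intro: ideal_gen.intros subst_polys[OF assms(1)] simp: subst_add subst_mult)

abbreviation (input) ee :: "nat \<Rightarrow> nat \<Rightarrow>\<^sub>0 nat" where "ee i \<equiv> Poly_Mapping.single i 1"

lemma keys_monom [simp]: "keys (monom a :: 'a::comm_ring_1 mpoly) = {a}"
  by (simp add: monom_def)

lemma Var_monom: "Var i = monom (ee i)"
  by (simp add: Var_def monom_def)

lemma mono_ideal_char:
  fixes G :: "(nat \<Rightarrow>\<^sub>0 nat) set"
  assumes G: "\<forall>g\<in>G. keys g \<subseteq> {..<n}"
  shows "(p :: 'a::comm_ring_1 mpoly) \<in> ideal_gen n (monom ` G) \<longleftrightarrow>
           p \<in> polys n \<and> (\<forall>a\<in>keys p. \<exists>g\<in>G. \<exists>c. a = g + c)"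
proof
  assume "p \<in> ideal_gen n (monom ` G)"
  then show "p \<in> polys n \<and> (\<forall>a\<in>keys p. \<exists>g\<in>G. \<exists>c. a = g + c)"
  proof induct
    case zero then show ?case by simp
  next
    case (gen s) then show ?case using G by (force simp: polys_monom)
  next
    case (add p q) then show ?case by (auto intro: polys_add dest!: set_mp[OF keys_add])
  next
    case (mult r p)
    have "\<exists>g\<in>G. \<exists>c. a = g + c" if "a \<in> keys (r * p)" for a
    proof -
      from set_mp[OF keys_mult that] obtain x y where "a = x + y" "y \<in> keys p" by auto
      with mult obtain g c where "g \<in> G" "y = g + c" by blast
      with \<open>a = x + y\<close> have "a = g + (c + x)" by (simp add: add_ac)
      with \<open>g\<in>G\<close> show ?thesis by blast
    qed
    with mult show ?case by (auto intro: polys_mult)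
  qed
next
  assume A: "p \<in> polys n \<and> (\<forall>a\<in>keys p. \<exists>g\<in>G. \<exists>c. a = g + c)"
  have "Poly_Mapping.single a (lookup p a) \<in> ideal_gen n (monom ` G)" if "a \<in> keys p" for a
  proof -
    from A that obtain g c where gc: "g \<in> G" "a = g + c" by blast
    from A that have "keys a \<subseteq> {..<n}" by (auto simp: polys_def)
    with gc have "keys c \<subseteq> {..<n}" by (auto simp: keys_add_nat)
    have "Poly_Mapping.single a (lookup p a) = Poly_Mapping.single c (lookup p a) * monom g"
      by (simp add: monom_def mult_single gc add.commute)
    also have "\<dots> \<in> ideal_gen n (monom ` G)"
      by (rule ideal_gen.mult) (auto intro: polys_single[OF \<open>keys c \<subseteq> _\<close>] ideal_gen.gen gc)
    finally show ?thesis .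
  qed
  then have "(\<Sum>a\<in>keys p. Poly_Mapping.single a (lookup p a)) \<in> ideal_gen n (monom ` G)"
    by (rule ideal_sum)
  then show "p \<in> ideal_gen n (monom ` G)" by (simp add: poly_repr[symmetric])
qed

lemma mono_ideal_monom:
  assumes G: "\<forall>g\<in>G. keys g \<subseteq> {..<n}"
  shows "(monom a :: 'a::comm_ring_1 mpoly) \<in> ideal_gen n (monom ` G) \<longleftrightarrow>
           keys a \<subseteq> {..<n} \<and> (\<exists>g\<in>G. \<exists>c. a = g + c)"
  using mono_ideal_char[OF G, of "monom a"] by (simp add: polys_def)

lemma mono_ideal_support:
  assumes G: "\<forall>g\<in>G. keys g \<subseteq> {..<n}"
  shows "(p :: 'a::comm_ring_1 mpoly) \<in> ideal_gen n (monom ` G) \<longleftrightarrow>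
           p \<in> polys n \<and> (\<forall>a\<in>keys p. monom a \<in> ideal_gen n (monom ` G))"
  using mono_ideal_char[OF G, of p] mono_ideal_monom[OF G] by (simp add: polys_def) blast

lemma split_ee: "0 < lookup a j \<Longrightarrow> a = ee j + (a - ee j)"
  by (rule poly_mapping_eqI) (auto simp: lookup_add lookup_minus lookup_single when_def)

locale ssJ =
  fixes n :: nat and J :: "'a::field_char_0 mpoly set" and G :: "(nat \<Rightarrow>\<^sub>0 nat) set"
  assumes ss: "strongly_stable n J"
    and G_keys: "\<forall>g\<in>G. keys g \<subseteq> {..<n}"
    and J_eq: "J = ideal_gen n (monom ` G)"
begin

definition Ip :: "nat \<Rightarrow> 'a mpoly set" where
  "Ip p = ideal_gen n (J \<union> Var ` {p..<n})"

lemma G'_keys: "\<forall>g\<in>G \<union> ee ` {p..<n}. keys g \<subseteq> {..<n}"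
  using G_keys by auto

lemma Ip_eq: "Ip p = ideal_gen n (monom ` (G \<union> ee ` {p..<n}))"
  unfolding Ip_def by (subst J_eq) (simp add: ideal_gen_absorb image_Un image_image Var_monom)

lemma Ip_n: "Ip n = J"
  unfolding Ip_def by (simp add: J_eq ideal_gen_idem)

lemma J_monom: "monom a \<in> J \<longleftrightarrow> keys a \<subseteq> {..<n} \<and> (\<exists>g\<in>G. \<exists>c. a = g + c)"
  unfolding J_eq by (rule mono_ideal_monom[OF G_keys])

lemma Ip_monom: "monom a \<in> Ip p \<longleftrightarrow> keys a \<subseteq> {..<n} \<and> (monom a \<in> J \<or> (\<exists>j. p \<le> j \<and> j < n \<and> 0 < lookup a j))"
proof -
  have "(\<exists>g\<in>ee ` {p..<n}. \<exists>c. a = g + c) \<longleftrightarrow> (\<exists>j. p \<le> j \<and> j < n \<and> 0 < lookup a j)"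
  proof
    assume "\<exists>g\<in>ee ` {p..<n}. \<exists>c. a = g + c"
    then obtain j c where "p \<le> j" "j < n" "a = ee j + c" by auto
    then show "\<exists>j. p \<le> j \<and> j < n \<and> 0 < lookup a j" by (auto simp: lookup_add)
  next
    assume "\<exists>j. p \<le> j \<and> j < n \<and> 0 < lookup a j"
    then obtain j where "p \<le> j" "j < n" "0 < lookup a j" by auto
    then have "ee j \<in> ee ` {p..<n}" "a = ee j + (a - ee j)" using split_ee[of a j] by auto
    then show "\<exists>g\<in>ee ` {p..<n}. \<exists>c. a = g + c" by blast
  qed
  then show ?thesis
    unfolding Ip_eq mono_ideal_monom[OF G'_keys] J_monom by blast
qed

lemma Ip_support: "f \<in> Ip p \<longleftrightarrow> f \<in> polys n \<and> (\<forall>a\<in>keys f. monom a \<in> Ip p)"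
  unfolding Ip_eq by (rule mono_ideal_support[OF G'_keys])

lemma J_Ip: "J \<subseteq> Ip p"
  unfolding Ip_def by (auto intro: ideal_gen.gen)

lemma Var_Ip: "p \<le> j \<Longrightarrow> j < n \<Longrightarrow> Var j \<in> Ip p"
  unfolding Ip_def by (auto intro: ideal_gen.gen)

lemma Ip_mono: "p' \<le> p \<Longrightarrow> Ip p \<subseteq> Ip p'"
  unfolding Ip_def by (rule ideal_gen_mono) auto

lemma Ip_polys: "Ip p \<subseteq> polys n"
  using Ip_support by auto

lemma monom_mult_Ip: "monom a \<in> Ip p \<Longrightarrow> keys b \<subseteq> {..<n} \<Longrightarrow> monom (a + b) \<in> Ip p"
proof -
  assume a: "monom a \<in> Ip p" and b: "keys b \<subseteq> {..<n}"
  have "\<exists>g\<in>G. \<exists>c. a + b = g + c" if "\<exists>g\<in>G. \<exists>c. a = g + c"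
    using that by (metis add.assoc)
  with a b show ?thesis unfolding Ip_monom J_monom by (auto simp: keys_add_nat lookup_add)
qed

lemma J_stable: "keys a \<subseteq> {..<n} \<Longrightarrow> k < n \<Longrightarrow> i < k \<Longrightarrow> monom (a + ee k) \<in> J \<Longrightarrow> monom (a + ee i) \<in> J"
  using ss unfolding strongly_stable_def by blast

lemma Ip_stable:
  assumes "keys a \<subseteq> {..<n}" "i < k" "k < p" "p \<le> n" "monom (a + ee k) \<in> Ip p"
  shows "monom (a + ee i) \<in> Ip p"
proof -
  from assms(5) have "monom (a + ee k) \<in> J \<or> (\<exists>j. p \<le> j \<and> j < n \<and> 0 < lookup (a + ee k) j)"
    by (simp add: Ip_monom)
  then have "monom (a + ee i) \<in> J \<or> (\<exists>j. p \<le> j \<and> j < n \<and> 0 < lookup (a + ee i) j)"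
  proof
    assume "monom (a + ee k) \<in> J"
    then have "monom (a + ee i) \<in> J" using J_stable[OF assms(1), of k i] assms by linarith
    then show ?thesis by blast
  next
    assume "\<exists>j. p \<le> j \<and> j < n \<and> 0 < lookup (a + ee k) j"
    then obtain j where "p \<le> j" "j < n" "0 < lookup (a + ee k) j" by auto
    with assms have "0 < lookup (a + ee i) j" by (auto simp: lookup_add lookup_single)
    with \<open>p \<le> j\<close> \<open>j < n\<close> show ?thesis by blast
  qed
  then show ?thesis using assms by (auto simp: Ip_monom keys_add_nat)
qed

lemma Ip_move:
  assumes "keys c \<subseteq> {..<n}" "i < j" "j < p" "p \<le> n" "monom (c + Poly_Mapping.single j t) \<in> Ip p"
  shows "monom (c + Poly_Mapping.single i t) \<in> Ip p"
  using assms(1,5)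
proof (induct t arbitrary: c)
  case 0 then show ?case by simp
next
  case (Suc t)
  have eq1: "c + Poly_Mapping.single j (Suc t) = (c + Poly_Mapping.single j t) + ee j"
    by (simp add: single_add[symmetric] add.assoc)
  have "monom ((c + Poly_Mapping.single j t) + ee i) \<in> Ip p"
    using Suc(3) assms(2-4) Suc(2)
    by (intro Ip_stable[of _ i j]) (auto simp: eq1 keys_add_nat)
  then have "monom ((c + ee i) + Poly_Mapping.single j t) \<in> Ip p" by (simp add: add_ac)
  then have "monom ((c + ee i) + Poly_Mapping.single i t) \<in> Ip p"
    using Suc(1)[of "c + ee i"] Suc(2) assms by (auto simp: keys_add_nat)
  then show ?case by (simp add: single_add[symmetric] add_ac)
qed

end

lemma mmr_transport:
  assumes inv1: "\<And>p. subst \<psi> (subst \<phi> p) = p" and inv2: "\<And>p. subst \<phi> (subst \<psi> p) = p"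
    and h\<phi>: "\<And>i. i < n \<Longrightarrow> \<phi> i \<in> homog n 1" and h\<psi>: "\<And>i. i < n \<Longrightarrow> \<psi> i \<in> homog n 1"
    and I1: "\<And>p. p \<in> I \<Longrightarrow> subst \<phi> p \<in> I'" and I2: "\<And>p. p \<in> I' \<Longrightarrow> subst \<psi> p \<in> I"
    and m: "mult_max_rank n I l d"
  shows "mult_max_rank n I' (subst \<phi> l) d"
  using m unfolding mult_max_rank_def
proof (elim disjE)
  assume inj: "\<forall>f\<in>homog n d. l * f \<in> I \<longrightarrow> f \<in> I"
  have "f \<in> I'" if "f \<in> homog n d" "subst \<phi> l * f \<in> I'" for f
  proof -
    have "subst \<psi> (subst \<phi> l * f) \<in> I" using I2 that(2) by blast
    then have "l * subst \<psi> f \<in> I" by (simp add: subst_mult inv1)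
    moreover have "subst \<psi> f \<in> homog n d" using subst_homog[of n \<psi>, OF h\<psi> that(1)] by blast
    ultimately have "subst \<psi> f \<in> I" using inj by blast
    then show ?thesis using I1[of "subst \<psi> f"] by (simp add: inv2)
  qed
  then show "(\<forall>f\<in>homog n d. subst \<phi> l * f \<in> I' \<longrightarrow> f \<in> I') \<or>
    (\<forall>g\<in>homog n (d + 1). \<exists>f\<in>homog n d. g - subst \<phi> l * f \<in> I')" by blast
next
  assume surj: "\<forall>g\<in>homog n (d + 1). \<exists>f\<in>homog n d. g - l * f \<in> I"
  have "\<exists>f\<in>homog n d. g - subst \<phi> l * f \<in> I'" if "g \<in> homog n (d+1)" for g
  proof -
    have "subst \<psi> g \<in> homog n (d+1)" using subst_homog[of n \<psi>, OF h\<psi> that] by blast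
    then obtain f where f: "f \<in> homog n d" "subst \<psi> g - l * f \<in> I" using surj by blast
    then have "subst \<phi> (subst \<psi> g - l * f) \<in> I'" using I1 by blast
    then have "g - subst \<phi> l * subst \<phi> f \<in> I'" by (simp add: subst_diff subst_mult inv2)
    moreover have "subst \<phi> f \<in> homog n d" using subst_homog[of n \<phi>, OF h\<phi> f(1)] by blast
    ultimately show ?thesis by blast
  qed
  then show "(\<forall>f\<in>homog n d. subst \<phi> l * f \<in> I' \<longrightarrow> f \<in> I') \<or>
    (\<forall>g\<in>homog n (d + 1). \<exists>f\<in>homog n d. g - subst \<phi> l * f \<in> I')" by blast
qed

lemma WLE_transport:
  assumes inv1: "\<And>p. subst \<psi> (subst \<phi> p) = p" and inv2: "\<And>p. subst \<phi> (subst \<psi> p) = p"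
    and h\<phi>: "\<And>i. i < n \<Longrightarrow> \<phi> i \<in> homog n 1" and h\<psi>: "\<And>i. i < n \<Longrightarrow> \<psi> i \<in> homog n 1"
    and I1: "\<And>p. p \<in> I \<Longrightarrow> subst \<phi> p \<in> I'" and I2: "\<And>p. p \<in> I' \<Longrightarrow> subst \<psi> p \<in> I"
    and m: "is_WLE n I l"
  shows "is_WLE n I' (subst \<phi> l)"
  using m mmr_transport[OF inv1 inv2 h\<phi> h\<psi> I1 I2] subst_homog[of n \<phi>, OF h\<phi>] unfolding is_WLE_def by blast

lemma mmr_cong:
  assumes m: "mult_max_rank n (ideal_gen n S) l' d"
    and dl: "l' - Poly_Mapping.single 0 c * l \<in> ideal_gen n S" and c: "(c::'a::field) \<noteq> 0"
  shows "mult_max_rank n (ideal_gen n S) l d"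
proof -
  from m consider (inj) "\<forall>f\<in>homog n d. l' * f \<in> ideal_gen n S \<longrightarrow> f \<in> ideal_gen n S"
    | (surj) "\<forall>g\<in>homog n (d + 1). \<exists>f\<in>homog n d. g - l' * f \<in> ideal_gen n S"
    unfolding mult_max_rank_def by blast
  then show ?thesis
  proof cases
    case inj
    have "f \<in> ideal_gen n S" if "f \<in> homog n d" "l * f \<in> ideal_gen n S" for f
    proof -
      have fp: "f \<in> polys n" using that(1) by (rule homog_polys)
      have "(l' - Poly_Mapping.single 0 c * l) * f + Poly_Mapping.single 0 c * (l * f) \<in> ideal_gen n S"
        by (intro ideal_gen.add ideal_mult_right ideal_smult dl that fp)
      then have "l' * f \<in> ideal_gen n S" by (simp add: algebra_simps)
      then show ?thesis using inj that by blast
    qed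
    then show ?thesis unfolding mult_max_rank_def by (intro disjI1) blast
  next
    case surj
    have "\<exists>f\<in>homog n d. g - l * f \<in> ideal_gen n S" if g: "g \<in> homog n (d+1)" for g
    proof -
      obtain f where f: "f \<in> homog n d" "g - l' * f \<in> ideal_gen n S" using bspec[OF surj g] by blast
      have fp: "f \<in> polys n" using f(1) by (rule homog_polys)
      have "(g - l' * f) + (l' - Poly_Mapping.single 0 c * l) * f \<in> ideal_gen n S"
        by (intro ideal_gen.add ideal_mult_right dl f fp)
      then have "g - l * (Poly_Mapping.single 0 c * f) \<in> ideal_gen n S" by (simp add: algebra_simps)
      moreover have "Poly_Mapping.single 0 c * f \<in> homog n d" using f(1) by (rule homog_smult)
      ultimately show ?thesis by blast
    qed
    then show ?thesis unfolding mult_max_rank_def by (intro disjI2) blast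
  qed
qed

lemma mmr_trivial: "(\<And>g. g \<in> homog n (d+1) \<Longrightarrow> g \<in> I) \<Longrightarrow> mult_max_rank n I l d"
  unfolding mult_max_rank_def by (intro disjI2 ballI bexI[of _ 0]) auto

lemma lookup_single_mult: "lookup (Poly_Mapping.single k c * f) (k + a) = c * lookup f (a::'b::cancel_comm_monoid_add)"
proof (induct f rule: pm_induct)
  case zero then show ?case by simp
next
  case (add b d f)
  have "Poly_Mapping.single k c * (Poly_Mapping.single b d + f) = Poly_Mapping.single (k+b) (c*d) + Poly_Mapping.single k c * f"
    by (simp add: distrib_left mult_single)
  then show ?case using add by (simp add: lookup_add lookup_single when_def distrib_left)
qed

lemma keys_Var_mult: "a \<in> keys f \<Longrightarrow> ee j + a \<in> keys (Var j * (f :: 'a::comm_ring_1 mpoly))"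
  by (simp add: Var_def lookup_single_mult in_keys_iff)

lemma keys_Var_mult2: "b \<in> keys (Var j * (f :: 'a::comm_ring_1 mpoly)) \<Longrightarrow> 0 < lookup b j"
  using keys_mult[of "Var j" f] by (auto simp: Var_def lookup_add)

lemma keys_single_add: "a \<notin> keys g \<Longrightarrow> c \<noteq> 0 \<Longrightarrow> keys (Poly_Mapping.single a c + g) = insert a (keys g)"
  by (auto simp: in_keys_iff lookup_add lookup_single when_def split: if_splits)

lemma decompose_Var:
  fixes g :: "'a::comm_ring_1 mpoly"
  assumes "g \<in> polys n" "\<forall>a\<in>keys g. mdeg a = Suc d" "j < n"
  shows "\<exists>f\<in>homog n d. keys (g - Var j * f) \<subseteq> {b\<in>keys g. lookup b j = 0}"
  using assms(1,2)
proof (induct g rule: pm_induct)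
  case zero then show ?case by (intro bexI[of _ 0]) auto
next
  case (add a c g)
  have ka: "keys (Poly_Mapping.single a c + g) = insert a (keys g)" using add by (simp add: keys_single_add)
  have "g \<in> polys n" "\<forall>a\<in>keys g. mdeg a = Suc d" using add(4,5) ka by (auto simp: polys_def)
  then obtain f where f: "f \<in> homog n d" "keys (g - Var j * f) \<subseteq> {b\<in>keys g. lookup b j = 0}"
    using add(3) by blast
  have a_keys: "keys a \<subseteq> {..<n}" "mdeg a = Suc d" using add(4,5) ka by (auto simp: polys_def)
  show ?case
  proof (cases "lookup a j = 0")
    case True
    have "keys (Poly_Mapping.single a c + g - Var j * f) \<subseteq> keys (Poly_Mapping.single a c) \<union> keys (g - Var j * f)"
    proof -
      have eq: "Poly_Mapping.single a c + g - Var j * f = Poly_Mapping.single a c + (g - Var j * f)" by (simp add: algebra_simps)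
      show ?thesis unfolding eq using keys_add[of "Poly_Mapping.single a c" "g - Var j * f"] by auto
    qed
    then have "keys (Poly_Mapping.single a c + g - Var j * f) \<subseteq> insert a (keys (g - Var j * f))"
      using add(2) by auto
    then show ?thesis using f(2) True ka by (intro bexI[OF _ f(1)]) auto
  next
    case False
    then have aeq: "a = ee j + (a - ee j)" by (intro split_ee) simp
    have "mdeg (a - ee j) = d" using a_keys(2) mdeg_add[of "ee j" "a - ee j"] aeq by simp
    moreover have "keys (a - ee j) \<subseteq> {..<n}" using a_keys(1) aeq keys_add_nat[of "ee j" "a - ee j"] by auto
    ultimately have h: "Poly_Mapping.single (a - ee j) c + f \<in> homog n d"
      by (intro homog_add f(1) homog_single)
    have "Var j * Poly_Mapping.single (a - ee j) c = Poly_Mapping.single a c"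
      unfolding Var_def mult_single aeq[symmetric] by simp
    then have eq: "Poly_Mapping.single a c + g - Var j * (Poly_Mapping.single (a - ee j) c + f) = g - Var j * f"
      by (simp add: algebra_simps)
    have "keys (Poly_Mapping.single a c + g - Var j * (Poly_Mapping.single (a - ee j) c + f))
       \<subseteq> {b\<in>keys (Poly_Mapping.single a c + g). lookup b j = 0}"
      unfolding eq using f ka by auto
    then show ?thesis using h by blast
  qed
qed

context ssJ
begin

lemma surj_monom:
  assumes s: "\<forall>g\<in>homog n (d+1). \<exists>f\<in>homog n d. g - Var j * f \<in> Ip p"
    and b: "keys b \<subseteq> {..<n}" "mdeg b = d+1" "lookup b j = 0"
  shows "monom b \<in> Ip p"
proof -
  obtain f where f: "f \<in> homog n d" "monom b - Var j * f \<in> Ip p"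
    using s homog_monom[OF b(1)] b(2) by force
  have "lookup (Var j * f) b = 0" using keys_Var_mult2[of b j f] b(3) by (auto simp: in_keys_iff)
  then have "b \<in> keys (monom b - Var j * f)" by (simp add: in_keys_iff lookup_minus monom_def)
  then show ?thesis using f(2) Ip_support by blast
qed

lemma stepA:
  assumes kp: "k < p" and pn: "p \<le> n" and m: "mult_max_rank n (Ip p) (Var k) d"
  shows "mult_max_rank n (Ip p) (Var (p-1)) d"
proof (cases "k = p - 1")
  case True then show ?thesis using m by simp
next
  case False
  with kp have kp1: "k < p - 1" by simp
  from m show ?thesis unfolding mult_max_rank_def
  proof (elim disjE)
    assume inj: "\<forall>f\<in>homog n d. Var k * f \<in> Ip p \<longrightarrow> f \<in> Ip p"
    have "f \<in> Ip p" if f: "f \<in> homog n d" "Var (p-1) * f \<in> Ip p" for f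
    proof -
      have "monom a \<in> Ip p" if a: "a \<in> keys f" for a
      proof -
        have ka: "keys a \<subseteq> {..<n}" "mdeg a = d" using f(1) a by (auto simp: homog_def polys_def)
        have "monom (ee (p-1) + a) \<in> Ip p"
          using keys_Var_mult[OF a, of "p-1"] f(2) Ip_support by blast
        then have "monom (a + ee k) \<in> Ip p"
          using Ip_stable[OF ka(1) kp1 _ pn, of ] kp by (simp add: add.commute)
        then have "Var k * monom a \<in> Ip p" by (simp add: Var_monom monom_add[symmetric] add.commute)
        then show ?thesis using inj homog_monom[OF ka(1)] ka(2) by auto
      qed
      then show ?thesis using Ip_support homog_polys[OF f(1)] by blast
    qed
    then show "(\<forall>f\<in>homog n d. Var (p - 1) * f \<in> Ip p \<longrightarrow> f \<in> Ip p) \<or>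
      (\<forall>g\<in>homog n (d + 1). \<exists>f\<in>homog n d. g - Var (p - 1) * f \<in> Ip p)" by blast
  next
    assume surj: "\<forall>g\<in>homog n (d + 1). \<exists>f\<in>homog n d. g - Var k * f \<in> Ip p"
    have mb: "monom b \<in> Ip p" if b: "keys b \<subseteq> {..<n}" "mdeg b = d+1" "lookup b (p-1) = 0" for b
    proof (cases "lookup b k = 0")
      case True then show ?thesis using surj_monom[OF surj b(1,2)] by blast
    next
      case False
      define t where "t = lookup b k"
      define c where "c = b - Poly_Mapping.single k t"
      have bc: "b = c + Poly_Mapping.single k t"
        by (rule poly_mapping_eqI) (simp add: c_def t_def lookup_add lookup_minus lookup_single when_def)
      have ck: "lookup c k = 0" "lookup c (p-1) = 0"
        using b(3) kp1 by (simp_all add: c_def t_def lookup_minus lookup_single)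
      have kc: "keys c \<subseteq> {..<n}" using b(1) bc keys_add_nat[of c "Poly_Mapping.single k t"] by auto
      let ?b' = "c + Poly_Mapping.single (p-1) t"
      have "keys ?b' \<subseteq> {..<n}" using kc kp pn by (auto simp: keys_add_nat)
      moreover have "mdeg ?b' = d+1" using b(2) bc by (simp add: mdeg_add)
      moreover have "lookup ?b' k = 0" using ck kp1 by (simp add: lookup_add lookup_single)
      ultimately have "monom ?b' \<in> Ip p" using surj_monom[OF surj] by blast
      then have "monom (c + Poly_Mapping.single k t) \<in> Ip p"
        using Ip_move[OF kc kp1 _ pn] kp by simp
      then show ?thesis using bc by simp
    qed
    have "\<exists>f\<in>homog n d. g - Var (p-1) * f \<in> Ip p" if g: "g \<in> homog n (d+1)" for g
    proof -
      obtain f where f: "f \<in> homog n d" "keys (g - Var (p-1) * f) \<subseteq> {b\<in>keys g. lookup b (p-1) = 0}"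
      proof -
        have "p - 1 < n" using kp pn by simp
        then show ?thesis using that decompose_Var[of g n d "p-1"] g by (auto simp: homog_def)
      qed
      have "g - Var (p-1) * f \<in> polys n"
        using g f(1) kp pn by (intro polys_diff polys_mult polys_Var) (auto simp: homog_def)
      moreover have "monom b \<in> Ip p" if "b \<in> keys (g - Var (p-1) * f)" for b
        using f(2) that g mb by (auto simp: homog_def polys_def)
      ultimately show ?thesis using f(1) Ip_support by blast
    qed
    then show "(\<forall>f\<in>homog n d. Var (p - 1) * f \<in> Ip p \<longrightarrow> f \<in> Ip p) \<or>
      (\<forall>g\<in>homog n (d + 1). \<exists>f\<in>homog n d. g - Var (p - 1) * f \<in> Ip p)" by blast
  qed
qed

end

lemma mdeg_one: "mdeg b = 1 \<Longrightarrow> \<exists>i. b = ee i"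
proof -
  assume b: "mdeg b = 1"
  then have "b \<noteq> 0" by (metis mdeg_zero zero_neq_one)
  then obtain i where "i \<in> keys b" by (metis keys_eq_empty ex_in_conv)
  then have "0 < lookup b i" by (simp add: in_keys_iff)
  then have beq: "b = ee i + (b - ee i)" by (rule split_ee)
  then have "mdeg (b - ee i) = 0" using b mdeg_add[of "ee i" "b - ee i"] by simp
  then have "b - ee i = 0" by (simp add: mdeg_zero_iff)
  with beq show ?thesis by auto
qed

lemma homog1_keys: "l \<in> homog n 1 \<Longrightarrow> b \<in> keys l \<Longrightarrow> \<exists>i<n. b = ee i"
proof -
  assume l: "l \<in> homog n 1" and b: "b \<in> keys l"
  then have "mdeg b = 1" "keys b \<subseteq> {..<n}" by (auto simp: homog_def polys_def)
  then show ?thesis using mdeg_one by fastforce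
qed

lemma mdeg_split: "t \<le> mdeg b \<Longrightarrow> \<exists>b' c. b = b' + c \<and> mdeg b' = t"
proof (induct t)
  case 0 then show ?case by (intro exI[of _ 0] exI[of _ b]) simp
next
  case (Suc t)
  then obtain b' c where bc: "b = b' + c" "mdeg b' = t" by auto
  with Suc(2) have "mdeg c \<noteq> 0" by (simp add: mdeg_add)
  then have "c \<noteq> 0" by auto
  then obtain i where "i \<in> keys c" by (metis keys_eq_empty ex_in_conv)
  then have "c = ee i + (c - ee i)" by (intro split_ee) (simp add: in_keys_iff)
  then have "b = (b' + ee i) + (c - ee i)" using bc by (metis add.assoc)
  moreover have "mdeg (b' + ee i) = Suc t" using bc by (simp add: mdeg_add)
  ultimately show ?case by blast
qed

lemma ee_inj [simp]: "Poly_Mapping.single x (1::nat) = Poly_Mapping.single j 1 \<longleftrightarrow> x = j"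
  by (metis lookup_single_eq lookup_single_not_eq one_neq_zero)

lemma ee_inj' [simp]: "Poly_Mapping.single x (Suc 0) = Poly_Mapping.single j (Suc 0) \<longleftrightarrow> x = j"
  using ee_inj by simp

lemma homog_Var': "i < n \<Longrightarrow> Var i \<in> homog n (Suc 0)"
  using homog_Var by simp

lemma lookup_sum_singles:
  "lookup (\<Sum>i\<in>A. Poly_Mapping.single (ee i) (f i)) (ee j) = (if j \<in> A then f j else 0)" if "finite A"
  using that by (simp add: lookup_sum lookup_single when_def sum.delta)

lemma lookup_sum_singles_other:
  "(\<forall>j. b \<noteq> ee j) \<Longrightarrow> lookup (\<Sum>i\<in>A. Poly_Mapping.single (ee i) (f i)) b = 0"
  by (auto simp: lookup_sum lookup_single when_def intro!: sum.neutral)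

definition phi :: "nat \<Rightarrow> (nat \<Rightarrow> 'a::comm_ring_1) \<Rightarrow> nat \<Rightarrow> 'a mpoly" where
  "phi k c j = (if j = k then Var k + (\<Sum>i<k. Poly_Mapping.single 0 (c i) * Var i) else Var j)"

lemma phi_homog: "k < n \<Longrightarrow> j < n \<Longrightarrow> phi k c j \<in> homog n 1"
  unfolding phi_def
  by (auto intro!: homog_add homog_sum homog_smult homog_Var')

lemma phi_inv: "subst (phi k (\<lambda>i. - c i)) (subst (phi k c) p) = p"
proof -
  have "(\<lambda>j. subst (phi k (\<lambda>i. - c i)) (phi k c j)) = Var"
  proof
    fix j
    show "subst (phi k (\<lambda>i. - c i)) (phi k c j) = Var j"
    proof (cases "j = k")
      case True
      have "subst (phi k (\<lambda>i. - c i)) (\<Sum>i<k. Poly_Mapping.single 0 (c i) * Var i)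
          = (\<Sum>i<k. Poly_Mapping.single 0 (c i) * Var i)"
        by (simp add: subst_sum subst_mult phi_def)
      moreover have "phi k (\<lambda>i. - c i) k = Var k - (\<Sum>i<k. Poly_Mapping.single 0 (c i) * Var i)"
        by (simp add: phi_def single_uminus sum_negf[symmetric])
      ultimately show ?thesis using True by (simp add: phi_def subst_add)
    next
      case False then show ?thesis by (simp add: phi_def)
    qed
  qed
  then show ?thesis by (simp add: subst_subst)
qed

lemma phi_inv2: "subst (phi k c) (subst (phi k (\<lambda>i. - c i)) p) = p"
  using phi_inv[of k "\<lambda>i. - c i" p] by simp

context ssJ
begin

lemma binom_J:
  fixes c :: "nat \<Rightarrow> 'a"
  assumes "k < n"
  shows "keys b \<subseteq> {..<n} \<Longrightarrow> monom (b + Poly_Mapping.single k e) \<in> J \<Longrightarrow>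
    monom b * (Var k + (\<Sum>i<k. Poly_Mapping.single 0 (c i) * Var i)) ^ e \<in> J"
proof (induct e arbitrary: b)
  case 0 then show ?case by simp
next
  case (Suc e)
  let ?P = "Var k + (\<Sum>i<k. Poly_Mapping.single 0 (c i) * Var i)"
  have mv: "(monom (b + ee i) :: 'a mpoly) = monom b * Var i" for i unfolding Var_monom by (rule monom_add)
  have s1: "(\<Sum>i<k. Poly_Mapping.single 0 (c i) * (monom b * Var i * ?P ^ e))
     = monom b * ?P ^ e * (\<Sum>i<k. Poly_Mapping.single 0 (c i) * Var i)"
    by (simp add: sum_distrib_left sum_distrib_right mult_ac)
  have eq: "monom b * ?P ^ Suc e = monom (b + ee k) * ?P ^ e
      + (\<Sum>i<k. Poly_Mapping.single 0 (c i) * (monom (b + ee i) * ?P ^ e))"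
    unfolding mv s1 by (simp add: algebra_simps)
  have "monom (b + ee k) * ?P ^ e \<in> J"
    using Suc(1)[of "b + ee k"] Suc(2,3) assms
    by (auto simp: keys_add_nat add.assoc single_add[symmetric])
  moreover have "monom (b + ee i) * ?P ^ e \<in> J" if "i < k" for i
  proof -
    have "monom ((b + Poly_Mapping.single k e) + ee i) \<in> J"
      using J_stable[of "b + Poly_Mapping.single k e" k i] Suc(2,3) assms that
      by (auto simp: keys_add_nat add.assoc single_add[symmetric])
    then show ?thesis using Suc(1)[of "b + ee i"] Suc(2) assms that
      by (auto simp: keys_add_nat add_ac)
  qed
  ultimately show ?case unfolding eq J_eq
    by (intro ideal_gen.add ideal_sum ideal_smult) auto
qed

lemma phi_monom_J:
  assumes "k < n" "monom g \<in> J"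
  shows "subst (phi k c) (monom g) \<in> J"
proof -
  define t where "t = lookup g k"
  define g' where "g' = g - Poly_Mapping.single k t"
  have geq: "g = g' + Poly_Mapping.single k t"
    by (rule poly_mapping_eqI) (simp add: g'_def t_def lookup_add lookup_minus lookup_single when_def)
  have g'k: "k \<notin> keys g'" by (simp add: g'_def t_def in_keys_iff lookup_minus)
  have kg: "keys g \<subseteq> {..<n}" using assms(2) J_monom by blast
  then have kg': "keys g' \<subseteq> {..<n}" using geq keys_add_nat[of g'] by auto
  have "subst (phi k c) (monom g) = mon (phi k c) g' * phi k c k ^ t"
    by (simp add: subst_monom geq mon_add)
  also have "mon (phi k c) g' = mon Var g'"
    by (rule mon_cong) (use g'k in \<open>auto simp: phi_def\<close>)
  also have "\<dots> = monom g'" by (rule mon_Var)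
  finally have eq: "subst (phi k c) (monom g) = monom g' * phi k c k ^ t" .
  have "phi k c k = Var k + (\<Sum>i<k. Poly_Mapping.single 0 (c i) * Var i)" by (simp add: phi_def)
  then have "monom g' * phi k c k ^ t \<in> J"
    using binom_J[OF assms(1) kg', of t c] assms(2) geq by simp
  then show ?thesis using eq by simp
qed

lemma G_in_J: "g \<in> G \<Longrightarrow> monom g \<in> J"
  unfolding J_eq by (auto intro: ideal_gen.gen)

lemma phi_J: "k < n \<Longrightarrow> f \<in> J \<Longrightarrow> subst (phi k c) f \<in> J"
proof -
  assume k: "k < n" and f: "f \<in> J"
  have "subst (phi k c) f \<in> ideal_gen n (subst (phi k c) ` monom ` G)"
    using f unfolding J_eq
    by (intro subst_ideal) (auto intro: homog_polys[OF phi_homog] k)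
  also have "\<dots> \<subseteq> ideal_gen n J"
    by (rule ideal_gen_subset) (auto intro!: ideal_gen.gen phi_monom_J k G_in_J)
  also have "\<dots> = J" by (simp add: J_eq ideal_gen_idem)
  finally show ?thesis .
qed

lemma phi_Ip: "k < p \<Longrightarrow> p \<le> n \<Longrightarrow> f \<in> Ip p \<Longrightarrow> subst (phi k c) f \<in> Ip p"
proof -
  assume k: "k < p" and pn: "p \<le> n" and f: "f \<in> Ip p"
  have "subst (phi k c) f \<in> ideal_gen n (subst (phi k c) ` (J \<union> Var ` {p..<n}))"
    using f unfolding Ip_def
    by (intro subst_ideal) (use k pn in \<open>auto intro: homog_polys[OF phi_homog]\<close>)
  also have "\<dots> \<subseteq> ideal_gen n (Ip p)"
  proof (rule ideal_gen_subset, rule subsetI)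
    fix x assume "x \<in> subst (phi k c) ` (J \<union> Var ` {p..<n})"
    then consider y where "y \<in> J" "x = subst (phi k c) y" | j where "p \<le> j" "j < n" "x = subst (phi k c) (Var j)"
      by auto
    then show "x \<in> ideal_gen n (Ip p)"
    proof cases
      case 1 then show ?thesis using phi_J[of k y c] k pn J_Ip by (auto intro: ideal_gen.gen)
    next
      case 2 then show ?thesis using k by (auto simp: phi_def intro!: ideal_gen.gen Var_Ip)
    qed
  qed
  also have "\<dots> = Ip p" by (simp add: Ip_def ideal_gen_idem)
  finally show ?thesis .
qed

definition coef :: "'a mpoly \<Rightarrow> nat \<Rightarrow> 'a" where "coef l i = lookup l (ee i)"

definition Kset :: "nat \<Rightarrow> 'a mpoly \<Rightarrow> nat set" where
  "Kset p l = {i. i < p \<and> coef l i \<noteq> 0 \<and> Var i \<notin> J}"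

lemma degenerate_mem:
  assumes l: "l \<in> homog n 1" and p: "p \<le> n" and K: "Kset p l = {}"
  shows "l \<in> Ip p"
proof -
  have "monom b \<in> Ip p" if b: "b \<in> keys l" for b
  proof -
    obtain i where i: "i < n" "b = ee i" using homog1_keys[OF l b] by blast
    then have "coef l i \<noteq> 0" using b by (simp add: coef_def in_keys_iff)
    then show ?thesis
    proof (cases "i < p")
      case True
      then have "Var i \<in> J" using K \<open>coef l i \<noteq> 0\<close> by (auto simp: Kset_def)
      then show ?thesis using i J_Ip by (auto simp: Var_monom)
    next
      case False then show ?thesis using i Var_Ip[of p i] by (simp add: Var_monom)
    qed
  qed
  then show ?thesis using Ip_support homog_polys[OF l] by blast
qed

lemma stepB_mem:
  assumes l: "l \<in> homog n 1" and p: "p \<le> n" and K: "Kset p l \<noteq> {}"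
  defines "k \<equiv> Max (Kset p l)"
  defines "c \<equiv> \<lambda>i. coef l i / coef l k"
  shows "k < p" "coef l k \<noteq> 0" "Var k \<notin> J"
    and "l - Poly_Mapping.single 0 (coef l k) * phi k c k \<in> Ip p"
proof -
  have fin: "finite (Kset p l)" by (simp add: Kset_def)
  have kK: "k \<in> Kset p l" using Max_in[OF fin K] by (simp add: k_def)
  then show kp: "k < p" and ak: "coef l k \<noteq> 0" and kJ: "Var k \<notin> J" by (auto simp: Kset_def)
  have E: "Poly_Mapping.single 0 (coef l k) * phi k c k = (\<Sum>i\<in>{..k}. Poly_Mapping.single (ee i) (coef l i))"
  proof -
    have "Poly_Mapping.single 0 (coef l k) * phi k c k
        = Poly_Mapping.single (ee k) (coef l k) + (\<Sum>i<k. Poly_Mapping.single (ee i) (coef l k * c i))"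
      by (simp add: phi_def distrib_left sum_distrib_left Var_def mult_single mult.assoc[symmetric])
    also have "\<dots> = Poly_Mapping.single (ee k) (coef l k) + (\<Sum>i<k. Poly_Mapping.single (ee i) (coef l i))"
      using ak by (simp add: c_def)
    also have "\<dots> = (\<Sum>i\<in>{..k}. Poly_Mapping.single (ee i) (coef l i))"
      by (simp add: lessThan_Suc_atMost[symmetric])
    finally show ?thesis .
  qed
  let ?D = "l - Poly_Mapping.single 0 (coef l k) * phi k c k"
  have "monom b \<in> Ip p" if b: "b \<in> keys ?D" for b
  proof -
    have "b \<in> keys l \<union> keys (\<Sum>i\<in>{..k}. Poly_Mapping.single (ee i) (coef l i))"
      using b E by (auto simp: in_keys_iff lookup_minus)
    then obtain i where i: "b = ee i" "i < n"
    proof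
      assume "b \<in> keys l" then show ?thesis using homog1_keys[OF l] that by blast
    next
      assume "b \<in> keys (\<Sum>i\<in>{..k}. Poly_Mapping.single (ee i) (coef l i))"
      then have lk: "lookup (\<Sum>i\<in>{..k}. Poly_Mapping.single (ee i) (coef l i)) b \<noteq> 0" by (simp add: in_keys_iff)
      then have "\<not> (\<forall>j. b \<noteq> ee j)"
        using lookup_sum_singles_other[where b=b and A="{..k}" and f="coef l"] by blast
      then obtain j where bj: "b = ee j" by blast
      have "lookup (\<Sum>i\<in>{..k}. Poly_Mapping.single (ee i) (coef l i)) (ee j) = (if j \<in> {..k} then coef l j else 0)"
        by (rule lookup_sum_singles) simp
      with lk bj have "j \<le> k" by (auto split: if_splits)
      then show ?thesis using that[OF bj] kp p by auto
    qed
    have L: "lookup (\<Sum>i\<in>{..k}. Poly_Mapping.single (ee i) (coef l i)) (ee i) = (if i \<in> {..k} then coef l i else 0)"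
      by (rule lookup_sum_singles) simp
    have "lookup ?D b = coef l i - (if i \<le> k then coef l i else 0)"
      using i E L by (simp add: lookup_minus coef_def)
    with b have ik: "k < i" "coef l i \<noteq> 0" by (auto simp: in_keys_iff split: if_splits)
    show ?thesis
    proof (cases "i < p")
      case True
      then have "i \<notin> Kset p l" using ik Max_ge[OF fin] k_def by fastforce
      then have "Var i \<in> J" using True ik by (auto simp: Kset_def)
      then show ?thesis using i J_Ip by (auto simp: Var_monom)
    next
      case False then show ?thesis using i Var_Ip[of p i] by (simp add: Var_monom)
    qed
  qed
  moreover have "?D \<in> polys n"
  proof -
    have "phi k c k \<in> polys n" using kp p by (intro homog_polys[OF phi_homog]) auto
    then show ?thesis using homog_polys[OF l] by (intro polys_diff polys_mult polys_const)
  qed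
  ultimately show "?D \<in> Ip p" using Ip_support by blast
qed

lemma degenerate_high:
  assumes l: "l \<in> Ip p" "is_WLE n (Ip p) l" and e: "2 \<le> e"
  shows "homog n e \<subseteq> Ip p"
proof -
  have m: "mult_max_rank n (Ip p) l 1" using l(2) by (simp add: is_WLE_def)
  have lf: "l * f \<in> Ip p" if "f \<in> polys n" for f
    using ideal_mult_right[OF that, of l] l(1) by (simp add: Ip_def)
  obtain t where t: "t \<in> {1, 2}" "homog n t \<subseteq> Ip p"
  proof (cases "\<forall>f\<in>homog n 1. l * f \<in> Ip p \<longrightarrow> f \<in> Ip p")
    case True then show ?thesis using that[of 1] lf homog_polys by blast
  next
    case False
    have "(\<forall>f\<in>homog n 1. l * f \<in> Ip p \<longrightarrow> f \<in> Ip p) \<or> (\<forall>g\<in>homog n (1+1). \<exists>f\<in>homog n 1. g - l * f \<in> Ip p)"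
      using m by (simp only: mult_max_rank_def)
    then have "\<forall>g\<in>homog n (1+1). \<exists>f\<in>homog n 1. g - l * f \<in> Ip p"
    proof
      assume "\<forall>f\<in>homog n 1. l * f \<in> Ip p \<longrightarrow> f \<in> Ip p" then show ?thesis using False by contradiction
    qed
    then have surj: "\<forall>g\<in>homog n 2. \<exists>f\<in>homog n 1. g - l * f \<in> Ip p" by (simp add: numeral_2_eq_2)
    have "g \<in> Ip p" if g: "g \<in> homog n 2" for g
    proof -
      obtain f where f: "f \<in> homog n 1" "g - l * f \<in> Ip p" using bspec[OF surj g] by blast
      have "(g - l * f) + l * f \<in> Ip p"
        unfolding Ip_def by (rule ideal_gen.add) (use f lf homog_polys in \<open>auto simp: Ip_def\<close>)
      then show ?thesis by simp
    qed
    then show ?thesis using that[of 2] by blast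
  qed
  have mb: "monom b \<in> Ip p" if b: "keys b \<subseteq> {..<n}" "mdeg b = e" for b
  proof -
    have "t \<le> mdeg b" using t e b by auto
    then obtain b' c where bc: "b = b' + c" "mdeg b' = t" using mdeg_split by blast
    have kb': "keys b' \<subseteq> {..<n}" "keys c \<subseteq> {..<n}" using b bc keys_add_nat[of b' c] by auto
    then have "monom b' \<in> Ip p" using t homog_monom[OF kb'(1)] bc by auto
    then show ?thesis using monom_mult_Ip[OF _ kb'(2)] bc by simp
  qed
  show ?thesis
  proof
    fix g :: "'a mpoly" assume g: "g \<in> homog n e"
    then have "\<forall>a\<in>keys g. monom a \<in> Ip p" using mb by (auto simp: homog_def polys_def)
    then show "g \<in> Ip p" using Ip_support homog_polys[OF g] by blast
  qed
qed

end

definition tr :: "nat \<Rightarrow> nat \<Rightarrow> nat \<Rightarrow> nat" where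
  "tr k q i = (if i = k then q else if i = q then k else i)"

lemma tr_tr [simp]: "tr k q (tr k q i) = i"
  by (simp add: tr_def)

lemma inj_tr: "inj (tr k q)"
  by (metis injI tr_tr)

definition sw :: "nat \<Rightarrow> nat \<Rightarrow> (nat \<Rightarrow>\<^sub>0 nat) \<Rightarrow> (nat \<Rightarrow>\<^sub>0 nat)" where
  "sw k q a = Poly_Mapping.map_key (tr k q) a"

lemma lookup_sw: "lookup (sw k q a) j = lookup a (tr k q j)"
  by (simp add: sw_def map_key.rep_eq[OF inj_tr])

lemma sw_sw [simp]: "sw k q (sw k q a) = a"
  by (rule poly_mapping_eqI) (simp add: lookup_sw)

lemma keys_sw: "keys (sw k q a) = tr k q ` keys a"
proof -
  have "j \<in> keys (sw k q a) \<longleftrightarrow> tr k q j \<in> keys a" for j by (simp add: in_keys_iff lookup_sw)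
  then show ?thesis by (auto simp: image_iff) (metis tr_tr)
qed

lemma sw_keys_n: "k < n \<Longrightarrow> q < n \<Longrightarrow> keys a \<subseteq> {..<n} \<Longrightarrow> keys (sw k q a) \<subseteq> {..<n}"
  by (auto simp: keys_sw tr_def)

lemma mdeg_sw: "mdeg (sw k q a) = mdeg a"
proof -
  have "mdeg (sw k q a) = (\<Sum>j\<in>tr k q ` keys a. lookup (sw k q a) j)" by (simp add: mdeg_def keys_sw)
  also have "\<dots> = (\<Sum>i\<in>keys a. lookup (sw k q a) (tr k q i))"
    by (simp add: sum.reindex[OF inj_on_subset[OF inj_tr subset_UNIV]] o_def)
  also have "\<dots> = mdeg a" by (simp add: lookup_sw mdeg_def)
  finally show ?thesis .
qed

lemma sw_id: "lookup b k = 0 \<Longrightarrow> lookup b q = 0 \<Longrightarrow> sw k q b = b"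
  by (rule poly_mapping_eqI) (simp add: lookup_sw tr_def)

lemma sw_move: "lookup c k = 0 \<Longrightarrow> lookup c q = 0 \<Longrightarrow> k \<noteq> q \<Longrightarrow>
   sw k q (c + Poly_Mapping.single k s) = c + Poly_Mapping.single q s"
  by (rule poly_mapping_eqI) (simp add: lookup_sw tr_def lookup_add lookup_single when_def)

lemma sw_move2: "lookup c k = 0 \<Longrightarrow> lookup c q = 0 \<Longrightarrow> k \<noteq> q \<Longrightarrow>
   sw k q (c + Poly_Mapping.single q s) = c + Poly_Mapping.single k s"
  by (rule poly_mapping_eqI) (auto simp: lookup_sw tr_def lookup_add lookup_single when_def)

definition tau :: "nat \<Rightarrow> nat \<Rightarrow> nat \<Rightarrow> 'a::comm_ring_1 mpoly" where
  "tau k q j = Var (tr k q j)"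

lemma tau_inv: "subst (tau k q) (subst (tau k q) p) = p"
proof -
  have h: "(\<lambda>j. subst (tau k q) (tau k q j)) = Var" by (simp add: tau_def fun_eq_iff)
  show ?thesis by (subst subst_subst) (simp only: h subst_Var_id)
qed

lemma tau_homog: "k < n \<Longrightarrow> q < n \<Longrightarrow> j < n \<Longrightarrow> tau k q j \<in> homog n 1"
  by (simp add: tau_def tr_def homog_Var')

lemma subst_tau_monom: "subst (tau k q) (monom a) = (monom (sw k q a) :: 'a::comm_ring_1 mpoly)"
proof -
  have "monom (sw k q a) = (mon Var (sw k q a) :: 'a mpoly)" by (simp add: mon_Var)
  also have "\<dots> = (\<Prod>j\<in>tr k q ` keys a. Var j ^ lookup (sw k q a) j)" by (simp add: mon_def keys_sw)
  also have "\<dots> = (\<Prod>i\<in>keys a. Var (tr k q i) ^ lookup (sw k q a) (tr k q i))"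
    by (simp add: prod.reindex[OF inj_on_subset[OF inj_tr subset_UNIV]] o_def)
  also have "\<dots> = mon (tau k q) a" by (simp add: mon_def lookup_sw tau_def)
  finally show ?thesis by (simp add: subst_monom)
qed

lemma finite_mons: "finite {b :: nat \<Rightarrow>\<^sub>0 nat. keys b \<subseteq> {..<n} \<and> mdeg b = e}"
proof -
  let ?M = "{b :: nat \<Rightarrow>\<^sub>0 nat. keys b \<subseteq> {..<n} \<and> mdeg b = e}"
  let ?r = "\<lambda>b::nat \<Rightarrow>\<^sub>0 nat. restrict (lookup b) {..<n}"
  have "?r ` ?M \<subseteq> PiE {..<n} (\<lambda>_. {..e})"
  proof
    fix x assume "x \<in> ?r ` ?M"
    then obtain b where b: "b \<in> ?M" "x = ?r b" by blast
    have "lookup b i \<le> e" for i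
    proof (cases "i \<in> keys b")
      case True
      then have "lookup b i \<le> mdeg b" unfolding mdeg_def by (intro member_le_sum) auto
      then show ?thesis using b by simp
    next
      case False then show ?thesis by (simp add: in_keys_iff)
    qed
    then show "x \<in> PiE {..<n} (\<lambda>_. {..e})" using b by (auto simp: restrict_PiE_iff)
  qed
  then have "finite (?r ` ?M)" by (rule finite_subset) (simp add: finite_PiE)
  moreover have "inj_on ?r ?M"
  proof (rule inj_onI)
    fix a b assume ab: "a \<in> ?M" "b \<in> ?M" "?r a = ?r b"
    show "a = b"
    proof (rule poly_mapping_eqI)
      fix i show "lookup a i = lookup b i"
      proof (cases "i < n")
        case True then show ?thesis using fun_cong[OF ab(3), of i] by simp
      next
        case False then have "i \<notin> keys a" "i \<notin> keys b" using ab by auto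
        then show ?thesis by (simp add: in_keys_iff)
      qed
    qed
  qed
  ultimately show ?thesis using finite_imageD by blast
qed

context ssJ
begin

definition Ue :: "nat \<Rightarrow> nat \<Rightarrow> (nat \<Rightarrow>\<^sub>0 nat) set" where
  "Ue p e = {b. keys b \<subseteq> {..<n} \<and> mdeg b = e \<and> monom b \<notin> Ip p}"

lemma finite_Ue: "finite (Ue p e)"
  by (rule finite_subset[OF _ finite_mons[of n e]]) (auto simp: Ue_def)

lemma card_A:
  assumes x: "x < n" and e: "2 \<le> e" and m: "mult_max_rank n (Ip p) (Var x) (e - 1)"
  shows "card {b \<in> Ue p e. lookup b x = 0} = card (Ue p e) - min (card (Ue p (e-1))) (card (Ue p e))"
proof -
  let ?U = "Ue p e" and ?U' = "Ue p (e-1)"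
  let ?A = "{b \<in> ?U. lookup b x = 0}" and ?D = "{b \<in> ?U. 0 < lookup b x}"
  let ?B = "{c \<in> ?U'. monom (c + ee x) \<notin> Ip p}"
  have fU: "finite ?U" "finite ?U'" by (rule finite_Ue)+
  have cU: "card ?U = card ?A + card ?D"
  proof -
    have "?U = ?A \<union> ?D" by auto
    moreover have "card (?A \<union> ?D) = card ?A + card ?D" by (rule card_Un_disjoint) (use fU in auto)
    ultimately show ?thesis by simp
  qed
  have bij: "bij_betw (\<lambda>c. c + ee x) ?B ?D"
  proof (rule bij_betw_imageI)
    show "inj_on (\<lambda>c. c + ee x) ?B" by (auto intro: inj_onI)
    show "(\<lambda>c. c + ee x) ` ?B = ?D"
    proof
      show "(\<lambda>c. c + ee x) ` ?B \<subseteq> ?D"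
        using x e by (auto simp: Ue_def keys_add_nat mdeg_add lookup_add)
      show "?D \<subseteq> (\<lambda>c. c + ee x) ` ?B"
      proof
        fix b assume b: "b \<in> ?D"
        then have beq: "b = ee x + (b - ee x)" by (intro split_ee) simp
        let ?c = "b - ee x"
        have kc: "keys ?c \<subseteq> {..<n}" using b beq keys_add_nat[of "ee x" ?c] by (auto simp: Ue_def)
        have "mdeg ?c = e - 1" using b beq mdeg_add[of "ee x" ?c] by (auto simp: Ue_def)
        moreover have "monom ?c \<notin> Ip p"
        proof
          assume "monom ?c \<in> Ip p"
          then have "monom (?c + ee x) \<in> Ip p" using monom_mult_Ip x by simp
          then show False using b beq by (simp add: Ue_def add.commute)
        qed
        moreover have "monom (?c + ee x) \<notin> Ip p" using b beq by (simp add: Ue_def add.commute)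
        ultimately have "?c \<in> ?B" using kc by (simp add: Ue_def)
        moreover have "b = ?c + ee x" using beq by (simp add: add.commute)
        ultimately show "b \<in> (\<lambda>c. c + ee x) ` ?B" by blast
      qed
    qed
  qed
  then have cBD: "card ?B = card ?D" by (rule bij_betw_same_card)
  have "card ?D \<le> card ?U" using fU by (intro card_mono) auto
  moreover have "card ?B \<le> card ?U'" using fU by (intro card_mono) auto
  moreover have "card ?D = card ?U' \<or> card ?D = card ?U"
  proof -
    from m consider (inj) "\<forall>f\<in>homog n (e-1). Var x * f \<in> Ip p \<longrightarrow> f \<in> Ip p"
      | (surj) "\<forall>g\<in>homog n (e-1+1). \<exists>f\<in>homog n (e-1). g - Var x * f \<in> Ip p"
      unfolding mult_max_rank_def by blast
    then show ?thesis
    proof cases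
      case inj
      have "?B = ?U'"
      proof (intro set_eqI iffI)
        fix c assume c: "c \<in> ?U'"
        have "monom (c + ee x) \<notin> Ip p"
        proof
          assume "monom (c + ee x) \<in> Ip p"
          then have "Var x * monom c \<in> Ip p" by (simp add: Var_monom monom_add[symmetric] add.commute)
          moreover have "monom c \<in> homog n (e-1)" using c homog_monom[of c n] by (auto simp: Ue_def)
          ultimately have "monom c \<in> Ip p" using inj by blast
          then show False using c by (simp add: Ue_def)
        qed
        then show "c \<in> ?B" using c by simp
      qed auto
      then show ?thesis using cBD by simp
    next
      case surj
      have "?A = {}"
      proof (intro equals0I)
        fix b assume b: "b \<in> ?A"
        have "monom b \<in> Ip p"
          by (rule surj_monom[of "e-1" x p b]) (use surj b e in \<open>auto simp: Ue_def\<close>)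
        then show False using b by (simp add: Ue_def)
      qed
      then have "card ?A = 0" by (simp only: card.empty)
      then have "card ?D = card ?U" using cU by linarith
      then show ?thesis by blast
    qed
  qed
  ultimately have "card ?D = min (card ?U') (card ?U)" using cBD by linarith
  then show ?thesis using cU by simp
qed

lemma Ip_q_le: "q \<le> p \<Longrightarrow> Ip p \<subseteq> Ip q" by (rule Ip_mono)

lemma swap_J:
  assumes kq: "k < q" and q: "q = p - 1" and pn: "p \<le> n" and kJ: "Var k \<notin> J"
    and mk: "\<And>d. 1 \<le> d \<Longrightarrow> mult_max_rank n (Ip p) (Var k) d"
    and mq: "\<And>d. 1 \<le> d \<Longrightarrow> mult_max_rank n (Ip p) (Var q) d"
    and b: "keys b \<subseteq> {..<n}" "monom b \<in> J" "lookup b q = 0"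
  shows "monom (sw k q b) \<in> Ip p"
proof -
  have qp: "q < p" "q < n" "k < n" using kq q pn by auto
  consider "mdeg b = 0" | "mdeg b = 1" | "2 \<le> mdeg b" by linarith
  then show ?thesis
  proof cases
    case 1
    then have "b = 0" by (simp add: mdeg_zero_iff)
    then have "sw k q b = b" by (intro sw_id) simp_all
    then show ?thesis using b J_Ip by auto
  next
    case 2
    then obtain i where bi: "b = ee i" using mdeg_one by blast
    have "i \<noteq> k" using b(2) kJ bi by (auto simp: Var_monom)
    moreover have "i \<noteq> q" using b(3) bi by (auto simp: lookup_single when_def)
    ultimately have "sw k q b = b" using bi by (intro sw_id) (simp_all add: lookup_single)
    then show ?thesis using b J_Ip by auto
  next
    case 3
    define e where "e = mdeg b"
    have e2: "2 \<le> e" using 3 by (simp add: e_def)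
    show ?thesis
    proof (rule ccontr)
      assume nsw: "monom (sw k q b) \<notin> Ip p"
      let ?Aq = "{b' \<in> Ue p e. lookup b' q = 0}" and ?Ak = "{b' \<in> Ue p e. lookup b' k = 0}"
      have "card ?Aq = card ?Ak"
        using card_A[OF qp(2) e2 mq] card_A[OF qp(3) e2 mk] e2 by simp
      have sub: "sw k q ` ?Aq \<subseteq> ?Ak"
      proof
        fix y assume "y \<in> sw k q ` ?Aq"
        then obtain b' where b': "b' \<in> ?Aq" "y = sw k q b'" by blast
        have "monom (sw k q b') \<notin> Ip p"
        proof
          assume in1: "monom (sw k q b') \<in> Ip p"
          define s where "s = lookup b' k"
          define c where "c = b' - Poly_Mapping.single k s"
          have bc: "b' = c + Poly_Mapping.single k s"
            by (rule poly_mapping_eqI) (simp add: c_def s_def lookup_add lookup_minus lookup_single when_def)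
          have c0: "lookup c k = 0" "lookup c q = 0" using b' kq
            by (simp_all add: c_def s_def lookup_minus lookup_single)
          have kc: "keys c \<subseteq> {..<n}" using b' bc keys_add_nat[of c] by (auto simp: Ue_def)
          have "sw k q b' = c + Poly_Mapping.single q s" using bc sw_move[OF c0] kq by simp
          then have "monom (c + Poly_Mapping.single k s) \<in> Ip p"
            using Ip_move[OF kc kq qp(1) pn] in1 by simp
          then show False using b' bc by (simp add: Ue_def)
        qed
        then show "y \<in> ?Ak" using b' qp by (auto simp: Ue_def mdeg_sw sw_keys_n lookup_sw tr_def)
      qed
      have swb: "sw k q b \<in> ?Ak - sw k q ` ?Aq"
      proof
        show "sw k q b \<in> ?Ak" using b nsw qp by (auto simp: Ue_def mdeg_sw sw_keys_n lookup_sw tr_def e_def)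
        show "sw k q b \<notin> sw k q ` ?Aq"
        proof
          assume "sw k q b \<in> sw k q ` ?Aq"
          then obtain b' where "b' \<in> ?Aq" "sw k q b = sw k q b'" by blast
          then have "b \<in> ?Aq" by (metis sw_sw)
          then show False using b J_Ip by (auto simp: Ue_def)
        qed
      qed
      have "inj_on (sw k q) ?Aq" by (rule inj_onI) (metis sw_sw)
      then have "card (sw k q ` ?Aq) = card ?Aq" by (rule card_image)
      moreover have "card (sw k q ` ?Aq) < card ?Ak"
        using sub swb finite_Ue[of p e] by (intro psubset_card_mono) auto
      ultimately show False using \<open>card ?Aq = card ?Ak\<close> by simp
    qed
  qed
qed

end

definition chain :: "nat \<Rightarrow> 'a::comm_ring_1 mpoly set \<Rightarrow> (nat \<Rightarrow> 'a mpoly) \<Rightarrow> nat \<Rightarrow> bool" where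
  "chain n S ls m \<longleftrightarrow> (\<forall>i<m. is_WLE n (ideal_gen n (S \<union> ls ` {..<i})) (ls i))"

lemma chain_cong:
  assumes "ideal_gen n S = ideal_gen n S'" "chain n S ls m"
  shows "chain n S' ls m"
proof -
  have "ideal_gen n (S \<union> X) = ideal_gen n (S' \<union> X)" for X
    using ideal_gen_absorb[of n S X] ideal_gen_absorb[of n S' X] assms(1) by simp
  then show ?thesis using assms(2) by (simp add: chain_def)
qed

lemma chain_shift:
  assumes "chain n S ls (Suc m)"
  shows "chain n (S \<union> {ls 0}) (ls \<circ> Suc) m"
proof -
  have "S \<union> {ls 0} \<union> (ls \<circ> Suc) ` {..<i} = S \<union> ls ` {..<Suc i}" for i
  proof -
    have "{..<Suc i} = insert 0 (Suc ` {..<i})" by (rule lessThan_Suc_eq_insert_0)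
    then show ?thesis by (auto simp: image_image)
  qed
  then show ?thesis using assms by (simp add: chain_def)
qed

lemma chain_transport:
  assumes inv1: "\<And>p. subst \<psi> (subst \<phi> p) = p" and inv2: "\<And>p. subst \<phi> (subst \<psi> p) = p"
    and h\<phi>: "\<And>i. i < n \<Longrightarrow> \<phi> i \<in> homog n 1" and h\<psi>: "\<And>i. i < n \<Longrightarrow> \<psi> i \<in> homog n 1"
    and c: "chain n S ls m"
  shows "chain n (subst \<phi> ` S) (subst \<phi> \<circ> ls) m"
  unfolding chain_def
proof (intro allI impI)
  fix i assume i: "i < m"
  let ?X = "S \<union> ls ` {..<i}"
  have w: "is_WLE n (ideal_gen n ?X) (ls i)" using c i by (simp add: chain_def)
  have eq: "subst \<phi> ` S \<union> (subst \<phi> \<circ> ls) ` {..<i} = subst \<phi> ` ?X" by (auto simp: image_Un image_image)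
  have p\<phi>: "\<And>i. i < n \<Longrightarrow> \<phi> i \<in> polys n" using h\<phi> homog_polys by blast
  have p\<psi>: "\<And>i. i < n \<Longrightarrow> \<psi> i \<in> polys n" using h\<psi> homog_polys by blast
  have s\<phi>: "subst \<phi> p \<in> ideal_gen n (subst \<phi> ` X)" if "p \<in> ideal_gen n X" for p X
    using p\<phi> that by (rule subst_ideal)
  have s\<psi>: "subst \<psi> p \<in> ideal_gen n (subst \<psi> ` X)" if "p \<in> ideal_gen n X" for p X
    using p\<psi> that by (rule subst_ideal)
  have "is_WLE n (ideal_gen n (subst \<phi> ` ?X)) (subst \<phi> (ls i))"
  proof (rule WLE_transport[OF inv1 inv2 h\<phi> h\<psi> _ _ w])
    fix p assume "p \<in> ideal_gen n ?X"
    then show "subst \<phi> p \<in> ideal_gen n (subst \<phi> ` ?X)" by (rule s\<phi>)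
  next
    fix p assume "p \<in> ideal_gen n (subst \<phi> ` ?X)"
    then have "subst \<psi> p \<in> ideal_gen n (subst \<psi> ` subst \<phi> ` ?X)" by (rule s\<psi>)
    then show "subst \<psi> p \<in> ideal_gen n ?X" by (simp add: image_image inv1)
  qed
  then show "is_WLE n (ideal_gen n (subst \<phi> ` S \<union> (subst \<phi> \<circ> ls) ` {..<i})) ((subst \<phi> \<circ> ls) i)"
    unfolding eq comp_apply .
qed

lemma ideal_gen_swap_gen:
  fixes c :: "'a::field"
  assumes "l - Poly_Mapping.single 0 c * l' \<in> ideal_gen n S" "c \<noteq> 0" "l' \<in> polys n"
  shows "ideal_gen n (S \<union> {l}) = ideal_gen n (S \<union> {l'})"
proof
  have "l = (l - Poly_Mapping.single 0 c * l') + Poly_Mapping.single 0 c * l'" by simp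
  also have "\<dots> \<in> ideal_gen n (S \<union> {l'})"
    by (intro ideal_gen.add ideal_smult set_mp[OF ideal_gen_mono assms(1)]) (auto intro: ideal_gen.gen)
  finally have "l \<in> ideal_gen n (S \<union> {l'})" .
  then show "ideal_gen n (S \<union> {l}) \<subseteq> ideal_gen n (S \<union> {l'})"
    by (intro ideal_gen_subset) (auto intro: ideal_gen.gen)
next
  have "l' = Poly_Mapping.single 0 (inverse c) * (l - (l - Poly_Mapping.single 0 c * l'))"
    using assms(2) by (simp add: mult.assoc[symmetric] mult_single)
  also have "\<dots> \<in> ideal_gen n (S \<union> {l})"
    by (intro ideal_smult ideal_diff set_mp[OF ideal_gen_mono assms(1)]) (auto intro: ideal_gen.gen)
  finally have "l' \<in> ideal_gen n (S \<union> {l})" .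
  then show "ideal_gen n (S \<union> {l'}) \<subseteq> ideal_gen n (S \<union> {l})"
    by (intro ideal_gen_subset) (auto intro: ideal_gen.gen)
qed

lemma tau_Var: "subst (tau k q) (Var j) = Var (tr k q j)"
  by (simp add: tau_def)

context ssJ
begin

lemma tau_polys: "k < n \<Longrightarrow> q < n \<Longrightarrow> j < n \<Longrightarrow> tau k q j \<in> polys n"
  using tau_homog homog_polys by blast

lemma tau_J_Ip:
  assumes kq: "k < q" "q < n" and f: "f \<in> J"
  shows "subst (tau k q) f \<in> Ip q"
proof -
  have "monom (sw k q g) \<in> Ip q" if g: "g \<in> G" for g
  proof -
    have kg: "keys g \<subseteq> {..<n}" using G_keys g by blast
    have ks: "keys (sw k q g) \<subseteq> {..<n}" using sw_keys_n[OF _ _ kg] kq by simp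
    show ?thesis
    proof (cases "lookup g k = 0")
      case False
      then have "0 < lookup (sw k q g) q" by (simp add: lookup_sw tr_def)
      then show ?thesis using ks kq by (auto simp: Ip_monom)
    next
      case True
      define t where "t = lookup g q"
      define c where "c = g - Poly_Mapping.single q t"
      have gc: "g = c + Poly_Mapping.single q t"
        by (rule poly_mapping_eqI) (simp add: c_def t_def lookup_add lookup_minus lookup_single when_def)
      have c0: "lookup c k = 0" "lookup c q = 0" using True kq by (simp_all add: c_def t_def lookup_minus lookup_single)
      have kc: "keys c \<subseteq> {..<n}" using kg gc keys_add_nat[of c] by auto
      have "sw k q g = c + Poly_Mapping.single k t" using gc sw_move2[OF c0] kq by simp
      moreover have "monom (c + Poly_Mapping.single k t) \<in> Ip n"
        using Ip_move[OF kc kq(1) kq(2) order_refl] G_in_J[OF g] gc Ip_n by simp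
      ultimately show ?thesis using Ip_n J_Ip by auto
    qed
  qed
  then have "subst (tau k q) ` monom ` G \<subseteq> ideal_gen n (Ip q)"
    by (auto simp: subst_tau_monom intro: ideal_gen.gen)
  moreover have "subst (tau k q) f \<in> ideal_gen n (subst (tau k q) ` monom ` G)"
    using f unfolding J_eq by (intro subst_ideal) (use kq in \<open>auto intro: tau_polys\<close>)
  ultimately have "subst (tau k q) f \<in> ideal_gen n (Ip q)" using ideal_gen_subset by blast
  then show ?thesis by (simp add: Ip_def ideal_gen_idem)
qed

lemma relabel:
  assumes kq: "k < q" and q: "q = p - 1" and pn: "p \<le> n" and kJ: "Var k \<notin> J"
    and mk: "\<And>d. 1 \<le> d \<Longrightarrow> mult_max_rank n (Ip p) (Var k) d"
    and mq: "\<And>d. 1 \<le> d \<Longrightarrow> mult_max_rank n (Ip p) (Var q) d"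
  shows "ideal_gen n (subst (tau k q) ` (J \<union> Var ` {p..<n} \<union> {Var k})) = Ip q"
proof
  let ?S = "J \<union> Var ` {p..<n} \<union> {Var k}"
  have qn: "q < n" "k < n" "q < p" using kq q pn by auto
  have trj: "tr k q j = j" if "p \<le> j" for j using that kq qn by (auto simp: tr_def)
  show "ideal_gen n (subst (tau k q) ` ?S) \<subseteq> Ip q"
  proof -
    have "subst (tau k q) ` ?S \<subseteq> ideal_gen n (Ip q)"
    proof
      fix x assume "x \<in> subst (tau k q) ` ?S"
      then consider f where "f \<in> J" "x = subst (tau k q) f" | j where "p \<le> j" "j < n" "x = Var j"
        | "x = Var q"
        using kq qn by (auto simp: tau_def tr_def)
      then have "x \<in> Ip q"
      proof cases
        case 1 then show ?thesis using tau_J_Ip kq qn by blast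
      next
        case 2 then show ?thesis using Var_Ip[of q j] qn by simp
      next
        case 3 then show ?thesis using Var_Ip[of q q] qn by simp
      qed
      then show "x \<in> ideal_gen n (Ip q)" by (rule ideal_gen.gen)
    qed
    then have "ideal_gen n (subst (tau k q) ` ?S) \<subseteq> ideal_gen n (Ip q)" by (rule ideal_gen_subset)
    then show ?thesis by (simp add: Ip_def ideal_gen_idem)
  qed
  show "Ip q \<subseteq> ideal_gen n (subst (tau k q) ` ?S)"
    unfolding Ip_def
  proof (rule ideal_gen_subset, rule subsetI)
    fix x assume x: "x \<in> J \<union> Var ` {q..<n}"
    have tp: "\<And>i. i < n \<Longrightarrow> tau k q i \<in> polys n" using tau_polys qn by blast
    have Ipp: "Ip p \<subseteq> ideal_gen n ?S" unfolding Ip_def by (rule ideal_gen_mono) auto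
    show "x \<in> ideal_gen n (subst (tau k q) ` ?S)"
    proof (cases "x \<in> J")
      case True
      have "monom (sw k q g) \<in> ideal_gen n ?S" if g: "g \<in> G" for g
      proof (cases "lookup g q = 0")
        case True
        then have "monom (sw k q g) \<in> Ip p"
          using swap_J[OF kq q pn kJ mk mq] G_in_J[OF g] G_keys g by blast
        then show ?thesis using Ipp by blast
      next
        case False
        then have "0 < lookup (sw k q g) k" by (simp add: lookup_sw tr_def)
        then have sg: "sw k q g = ee k + (sw k q g - ee k)" by (rule split_ee)
        have kg: "keys g \<subseteq> {..<n}" using G_keys g by blast
        have ks: "keys (sw k q g - ee k) \<subseteq> {..<n}"
          using sw_keys_n[OF qn(2) qn(1) kg] sg keys_add_nat[of "ee k" "sw k q g - ee k"] by auto
        have "(monom (sw k q g) :: 'a mpoly) = monom (sw k q g - ee k) * Var k"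
          by (metis sg monom_add Var_monom mult.commute)
        also have "\<dots> \<in> ideal_gen n ?S"
          by (rule ideal_gen.mult[OF polys_monom[OF ks]]) (auto intro: ideal_gen.gen)
        finally show ?thesis .
      qed
      then have "subst (tau k q) ` monom ` G \<subseteq> ideal_gen n ?S"
        by (auto simp: subst_tau_monom)
      moreover have "subst (tau k q) x \<in> ideal_gen n (subst (tau k q) ` monom ` G)"
        using tp True[unfolded J_eq] by (rule subst_ideal)
      ultimately have sx: "subst (tau k q) x \<in> ideal_gen n ?S" using ideal_gen_subset by blast
      have "subst (tau k q) (subst (tau k q) x) \<in> ideal_gen n (subst (tau k q) ` ?S)"
        using tp sx by (rule subst_ideal)
      then show ?thesis by (simp add: tau_inv)
    next
      case False
      then obtain j where j: "q \<le> j" "j < n" "x = Var j" using x by auto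
      show ?thesis
      proof (cases "j = q")
        case True
        then have "x = subst (tau k q) (Var k)" using j by (simp add: tau_def tr_def)
        moreover have "Var k \<in> ?S" by auto
        ultimately have "x \<in> subst (tau k q) ` ?S" by blast
        then show ?thesis by (rule ideal_gen.gen)
      next
        case False
        then have "p \<le> j" using j q by auto
        then have "x = subst (tau k q) (Var j)" using j by (simp add: tau_def trj)
        moreover have "Var j \<in> ?S" using \<open>p \<le> j\<close> j by auto
        ultimately have "x \<in> subst (tau k q) ` ?S" by blast
        then show ?thesis by (rule ideal_gen.gen)
      qed
    qed
  qed
qed

end

context ssJ
begin

lemma WLE_trivial:
  assumes "\<And>e. 2 \<le> e \<Longrightarrow> homog n e \<subseteq> I" "j < n"
  shows "is_WLE n I (Var j)"
  unfolding is_WLE_def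
proof (intro conjI allI impI)
  show "Var j \<in> homog n 1" using assms(2) by (rule homog_Var)
  fix d :: nat assume "1 \<le> d"
  then have "homog n (d+1) \<subseteq> I" using assms(1) by simp
  then show "mult_max_rank n I (Var j) d" by (intro mmr_trivial) auto
qed

lemma main:
  "\<forall>p ls. p \<le> n \<longrightarrow> m \<le> p \<longrightarrow> chain n (J \<union> Var ` {p..<n}) ls m \<longrightarrow>
     (\<forall>i<m. is_WLE n (Ip (p - i)) (Var (p - 1 - i)))"
proof (induct m)
  case 0 then show ?case by simp
next
  case (Suc m)
  show ?case
  proof (rule allI, rule allI, rule impI, rule impI, rule impI)
    fix p ls assume pn: "p \<le> n" and mp: "Suc m \<le> p" and ch: "chain n (J \<union> Var ` {p..<n}) ls (Suc m)"
    let ?S = "J \<union> Var ` {p..<n}"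
    have IpS: "Ip p = ideal_gen n ?S" by (simp add: Ip_def)
    have "is_WLE n (ideal_gen n (?S \<union> ls ` {..<0})) (ls 0)" using ch unfolding chain_def by blast
    then have w0: "is_WLE n (Ip p) (ls 0)" by (simp add: Ip_def)
    define l where "l = ls 0"
    have lh: "l \<in> homog n 1" using w0 by (simp add: is_WLE_def l_def)
    show "\<forall>i<Suc m. is_WLE n (Ip (p - i)) (Var (p - 1 - i))"
    proof (cases "Kset p l = {}")
      case True
      have "l \<in> Ip p" by (rule degenerate_mem[OF lh pn True])
      then have hi: "homog n e \<subseteq> Ip p" if "2 \<le> e" for e
        using degenerate_high[of l p e] w0 that l_def by blast
      show ?thesis
      proof (intro allI impI)
        fix i assume "i < Suc m"
        have "homog n e \<subseteq> Ip (p - i)" if "2 \<le> e" for e using hi[OF that] Ip_mono[of "p-i" p] by auto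
        moreover have "p - 1 - i < n" using pn mp by linarith
        ultimately show "is_WLE n (Ip (p - i)) (Var (p - 1 - i))" by (rule WLE_trivial)
      qed
    next
      case False
      define k where "k = Max (Kset p l)"
      define c where "c = (\<lambda>i. coef l i / coef l k)"
      have kp: "k < p" and ak: "coef l k \<noteq> 0" and kJ: "Var k \<notin> J"
        and D: "l - Poly_Mapping.single 0 (coef l k) * phi k c k \<in> Ip p"
        using stepB_mem[OF lh pn False] by (simp_all add: k_def c_def)
      have kn: "k < n" using kp pn by simp
      have pk_h: "\<And>j. j < n \<Longrightarrow> phi k c j \<in> homog n 1" using phi_homog kn by blast
      have pkh2: "\<And>j. j < n \<Longrightarrow> phi k (\<lambda>i. - c i) j \<in> homog n 1" using phi_homog kn by blast
      have bk: "subst (phi k (\<lambda>i. - c i)) (phi k c k) = Var k"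
        using phi_inv[of k c "Var k"] by simp
      have I1: "\<And>f. f \<in> Ip p \<Longrightarrow> subst (phi k (\<lambda>i. - c i)) f \<in> Ip p" using phi_Ip[OF kp pn] by blast
      have I2: "\<And>f. f \<in> Ip p \<Longrightarrow> subst (phi k c) f \<in> Ip p" using phi_Ip[OF kp pn] by blast
      have mk: "mult_max_rank n (Ip p) (Var k) d" if "1 \<le> d" for d
      proof -
        have "mult_max_rank n (ideal_gen n ?S) l d" using w0 that by (simp add: is_WLE_def l_def IpS)
        then have m1: "mult_max_rank n (ideal_gen n ?S) (phi k c k) d"
          using D ak unfolding IpS by (rule mmr_cong)
        have "mult_max_rank n (Ip p) (subst (phi k (\<lambda>i. - c i)) (phi k c k)) d"
          using m1[folded IpS] phi_inv2[of k c] phi_inv[of k c] pkh2 pk_h I1 I2 by (rule mmr_transport[rotated 6])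
        then show ?thesis by (simp only: bk)
      qed
      have mq: "mult_max_rank n (Ip p) (Var (p - 1)) d" if "1 \<le> d" for d
        using stepA[OF kp pn mk[OF that]] .
      have p1n: "p - 1 < n" using pn mp by linarith
      have t0: "is_WLE n (Ip p) (Var (p - 1))"
        unfolding is_WLE_def using mq homog_Var[OF p1n] by blast
      have ch1: "chain n (?S \<union> {l}) (ls \<circ> Suc) m" using chain_shift[OF ch] by (simp add: l_def)
      have phk_polys: "phi k c k \<in> polys n" using pk_h[OF kn] by (rule homog_polys)
      have "ideal_gen n (?S \<union> {l}) = ideal_gen n (?S \<union> {phi k c k})"
        by (rule ideal_gen_swap_gen[OF _ ak phk_polys]) (use D in \<open>simp add: IpS\<close>)
      then have ch2: "chain n (?S \<union> {phi k c k}) (ls \<circ> Suc) m" using ch1 by (rule chain_cong)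
      have ch3: "chain n (subst (phi k (\<lambda>i. - c i)) ` (?S \<union> {phi k c k}))
                   (subst (phi k (\<lambda>i. - c i)) \<circ> (ls \<circ> Suc)) m"
        using phi_inv2[of k c] phi_inv[of k c] pkh2 pk_h ch2 by (rule chain_transport)
      let ?\<psi> = "subst (phi k (\<lambda>i. - c i))"
      have psiS: "ideal_gen n (?\<psi> ` ?S) = Ip p"
      proof
        show "ideal_gen n (?\<psi> ` ?S) \<subseteq> Ip p"
          unfolding IpS by (rule ideal_gen_subset) (use I1 in \<open>auto simp: IpS intro: ideal_gen.gen\<close>)
        show "Ip p \<subseteq> ideal_gen n (?\<psi> ` ?S)"
        proof
          fix f assume f: "f \<in> Ip p"
          have "subst (phi k c) f \<in> ideal_gen n ?S" using I2[OF f] by (simp add: IpS)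
          then have "?\<psi> (subst (phi k c) f) \<in> ideal_gen n (?\<psi> ` ?S)"
            using homog_polys[OF pkh2] by (intro subst_ideal) auto
          then show "f \<in> ideal_gen n (?\<psi> ` ?S)" by (simp add: phi_inv)
        qed
      qed
      have "ideal_gen n (?\<psi> ` (?S \<union> {phi k c k})) = ideal_gen n (?S \<union> {Var k})"
      proof -
        have e1: "?\<psi> ` (?S \<union> {phi k c k}) = ?\<psi> ` ?S \<union> {Var k}" using bk by simp
        have "ideal_gen n (?\<psi> ` (?S \<union> {phi k c k})) = ideal_gen n (ideal_gen n (?\<psi> ` ?S) \<union> {Var k})"
          unfolding e1 ideal_gen_absorb by (rule refl)
        also have "\<dots> = ideal_gen n (ideal_gen n ?S \<union> {Var k})" using psiS IpS by simp
        also have "\<dots> = ideal_gen n (?S \<union> {Var k})" by (rule ideal_gen_absorb)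
        finally show ?thesis .
      qed
      then have ch4: "chain n (?S \<union> {Var k}) (?\<psi> \<circ> (ls \<circ> Suc)) m" using ch3 by (rule chain_cong)
      obtain ls' where ch5: "chain n (J \<union> Var ` {p - 1..<n}) ls' m"
      proof (cases "k = p - 1")
        case True
        have "?S \<union> {Var k} = J \<union> Var ` {p - 1..<n}"
        proof -
          have "{p - 1..<n} = insert (p - 1) {p..<n}" using mp pn by auto
          then show ?thesis using True by auto
        qed
        then show ?thesis using ch4 that by metis
      next
        case False
        then have kq: "k < p - 1" using kp by simp
        have q1: "p - 1 < n" "k < n" using p1n kn by auto
        have th: "\<And>j. j < n \<Longrightarrow> tau k (p - 1) j \<in> homog n 1" using tau_homog q1 by blast
        have "chain n (subst (tau k (p-1)) ` (?S \<union> {Var k})) (subst (tau k (p-1)) \<circ> (?\<psi> \<circ> (ls \<circ> Suc))) m"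
          using tau_inv[of k "p-1"] tau_inv[of k "p-1"] th th ch4 by (rule chain_transport)
        moreover have "ideal_gen n (subst (tau k (p-1)) ` (?S \<union> {Var k})) = ideal_gen n (J \<union> Var ` {p - 1..<n})"
          using relabel[OF kq refl pn kJ mk mq] by (simp add: Ip_def Un_assoc)
        ultimately show ?thesis using that chain_cong by blast
      qed
      have R: "\<forall>i<m. is_WLE n (Ip (p - 1 - i)) (Var (p - 1 - 1 - i))"
        using Suc[rule_format, of "p - 1" ls'] ch5 pn mp by simp
      show ?thesis
      proof (intro allI impI)
        fix i assume i: "i < Suc m"
        show "is_WLE n (Ip (p - i)) (Var (p - 1 - i))"
        proof (cases i)
          case 0 then show ?thesis using t0 by simp
        next
          case (Suc i')
          then have "i' < m" using i by simp
          then have "is_WLE n (Ip (p - 1 - i')) (Var (p - 1 - 1 - i'))" using R by blast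
          moreover have "p - 1 - i' = p - i" "p - 1 - 1 - i' = p - 1 - i" using Suc by auto
          ultimately show ?thesis by simp
        qed
      qed
    qed
  qed
qed

end

theorem lemma4p4:
  fixes J :: "'a::field_char_0 mpoly set" and n m :: nat
  assumes "strongly_stable n J"
    and "1 \<le> m" and "m \<le> n"
  shows "m_times_WLP n J m \<longleftrightarrow>
    (\<forall>i<m. is_WLE n (ideal_gen n (J \<union> {Var (n - 1 - j) | j. j < i})) (Var (n - 1 - i)))"
proof -
  obtain G where G: "\<forall>a\<in>G. keys a \<subseteq> {..<n}" "J = ideal_gen n (monom ` G)"
    using assms(1) unfolding strongly_stable_def monomial_ideal_def by blast
  interpret ssJ n J G using assms(1) G by unfold_locales auto
  have setq: "{Var (n - 1 - j) | j. j < i} = Var ` {n - i..<n}" if "i \<le> n" for i :: nat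
  proof
    show "{Var (n - 1 - j) | j. j < i} \<subseteq> Var ` {n - i..<n}" using that by auto
    show "Var ` {n - i..<n} \<subseteq> {Var (n - 1 - j) | j. j < i}"
    proof
      fix x assume "x \<in> Var ` {n - i..<n}"
      then obtain t where t: "n - i \<le> t" "t < n" "x = Var t" by auto
      then have "x = Var (n - 1 - (n - 1 - t))" "n - 1 - t < i" using that by auto
      then show "x \<in> {Var (n - 1 - j) | j. j < i}" by blast
    qed
  qed
  have IpI: "ideal_gen n (J \<union> {Var (n - 1 - j) | j. j < i}) = Ip (n - i)" if "i \<le> n" for i
    unfolding setq[OF that] Ip_def by (rule refl)
  have mt: "m_times_WLP n J m \<longleftrightarrow> (\<exists>ls. chain n J ls m)" by (simp add: m_times_WLP_def chain_def)
  show ?thesis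
  proof
    assume "m_times_WLP n J m"
    then obtain ls where "chain n J ls m" using mt by blast
    then have "chain n (J \<union> Var ` {n..<n}) ls m" by simp
    then have R: "\<forall>i<m. is_WLE n (Ip (n - i)) (Var (n - 1 - i))" using main[of m] assms(3) by blast
    show "\<forall>i<m. is_WLE n (ideal_gen n (J \<union> {Var (n - 1 - j) |j. j < i})) (Var (n - 1 - i))"
    proof (intro allI impI)
      fix i assume i: "i < m"
      then show "is_WLE n (ideal_gen n (J \<union> {Var (n - 1 - j) |j. j < i})) (Var (n - 1 - i))"
        using R IpI[of i] assms(3) by simp
    qed
  next
    assume R: "\<forall>i<m. is_WLE n (ideal_gen n (J \<union> {Var (n - 1 - j) |j. j < i})) (Var (n - 1 - i))"
    have "chain n J (\<lambda>i. Var (n - 1 - i)) m" unfolding chain_def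
    proof (intro allI impI)
      fix i assume i: "i < m"
      have eq: "(\<lambda>i. Var (n - 1 - i)) ` {..<i} = {Var (n - 1 - j) |j. j < i}" by auto
      show "is_WLE n (ideal_gen n (J \<union> (\<lambda>i. Var (n - 1 - i)) ` {..<i})) (Var (n - 1 - i))"
        unfolding eq using R i by blast
    qed
    then show "m_times_WLP n J m" using mt by blast
  qed
qed

end
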